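(* Let $K$ be a field, $n\ge 1$, and $A,B\in M_n(K)$. Consider the properties: $(\bot)$: $A$ has an eigen-covector $u$ and $B$ has an eigenvector $v$ with $uv=0$. $(\subset)$: $B$ has an eigenvector contained in an $(n-1)$-dimensional $A$-invariant subspace of $K^n$. $(\triangle)$: $n\ge 2$ and there is $P\in GL_n(K)$ with $P^{-1}AP=\begin{pmatrix}A'&*\\0&a\end{pmatrix}$ and $P^{-1}BP=\begin{pmatrix}b&*\\0&B'\end{pmatrix}$, where $a,b\in K$ and $A',B'\in M_{n-1}(K)$. $(<)$: $B$ has an eigenvector $v$ with $\dim K[A]v<n$. $(\top)$: $T(A,B)=0$. Then: (a) $(\bot)\Leftrightarrow(\subset)\Leftrightarrow(\triangle)\Rightarrow(<)\Rightarrow(\top)$. (b) If $K$ contains all eigenvalues of $A$, then $(\bot),(\subset),(\triangle),(<)$ are equivalent. (c) If $K$ contains all eigenvalues of $A$ and of $B$, then all five properties are equivalent.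
   Context: For a commutative ring $R$ with $1$ and $A,B\in M_n(R)$, $M(A,B)\in M_{n^2}(R)$ is the block matrix consisting of $n\times n$ blocks whose $(i,j)$-th block is $A^{j-1}B^{i-1}$ ($i,j=1,\dots,n$), and the (first) triangulant is $T(A,B)=\det M(A,B)$. Vectors are column vectors in $K^n$, covectors are row vectors. An eigenvector of $A$ is a nonzero column vector $v$ with $Av=\lambda v$ for some $\lambda\in K$; an eigen-covector of $A$ is a nonzero row vector $u$ with $uA=\lambda u$ for some $\lambda\in K$. A subspace $V\le K^n$ is $A$-invariant if $AV\subseteq V$. $K[A]$ denotes the unital subalgebra of $M_n(K)$ generated by $A$, so $K[A]v$ is the $A$-invariant subspace generated by $v$. *)

theory Defs
  imports "Jordan_Normal_Form.Jordan_Normal_Form" "Jordan_Normal_Form.VS_Connect"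
begin

text \<open>Matrices are JNF matrices of explicit dimension n. Covectors (row vectors) are
  1 x n matrices; vectors (column vectors) are JNF vectors of dimension n.\<close>

definition triangulant_mat :: "nat \<Rightarrow> 'a :: comm_ring_1 mat \<Rightarrow> 'a mat \<Rightarrow> 'a mat" where
  "triangulant_mat n A B = mat (n * n) (n * n)
     (\<lambda>(r, c). (A ^\<^sub>m (c div n) * B ^\<^sub>m (r div n)) $$ (r mod n, c mod n))"

definition triangulant :: "nat \<Rightarrow> 'a :: comm_ring_1 mat \<Rightarrow> 'a mat \<Rightarrow> 'a" where
  "triangulant n A B = det (triangulant_mat n A B)"

definition eigencovector :: "'a :: comm_ring_1 mat \<Rightarrow> 'a mat \<Rightarrow> 'a \<Rightarrow> bool" where
  "eigencovector A u k = (u \<in> carrier_mat 1 (dim_row A) \<and> u \<noteq> 0\<^sub>m 1 (dim_row A) \<and> u * A = k \<cdot>\<^sub>m u)"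

definition subspace_dim :: "nat \<Rightarrow> 'a :: field vec set \<Rightarrow> nat" where
  "subspace_dim n W = vectorspace.dim (class_ring :: 'a ring) ((module_vec TYPE('a) n)\<lparr>carrier := W\<rparr>)"

definition is_subspace :: "nat \<Rightarrow> 'a :: field vec set \<Rightarrow> bool" where
  "is_subspace n W = VectorSpace.subspace (class_ring :: 'a ring) W (module_vec TYPE('a) n)"

definition cyclic_subspace :: "nat \<Rightarrow> 'a :: field mat \<Rightarrow> 'a vec \<Rightarrow> 'a vec set" where
  "cyclic_subspace n A v = module.span (class_ring :: 'a ring) (module_vec TYPE('a) n)
      {(A ^\<^sub>m k) *\<^sub>v v | k. True}"

text \<open>K contains all eigenvalues of A: the characteristic polynomial splits into linear factors.\<close>
definition char_poly_splits :: "'a :: field mat \<Rightarrow> bool" where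
  "char_poly_splits A = (\<exists>as. char_poly A = (\<Prod>a\<leftarrow>as. [:- a, 1:]))"

definition prop_perp :: "nat \<Rightarrow> 'a :: field mat \<Rightarrow> 'a mat \<Rightarrow> bool" where
  "prop_perp n A B = (\<exists>u k v l. eigencovector A u k \<and> eigenvector B v l \<and> u *\<^sub>v v = 0\<^sub>v 1)"

definition prop_sub :: "nat \<Rightarrow> 'a :: field mat \<Rightarrow> 'a mat \<Rightarrow> bool" where
  "prop_sub n A B = (\<exists>W v l. is_subspace n W \<and> subspace_dim n W = n - 1
      \<and> (\<forall>w \<in> W. A *\<^sub>v w \<in> W) \<and> v \<in> W \<and> eigenvector B v l)"

definition prop_tri :: "nat \<Rightarrow> 'a :: field mat \<Rightarrow> 'a mat \<Rightarrow> bool" where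
  "prop_tri n A B = (n \<ge> 2 \<and> (\<exists>P Pinv A' B' X Y a b.
      P \<in> carrier_mat n n \<and> Pinv \<in> carrier_mat n n \<and> P * Pinv = 1\<^sub>m n \<and> Pinv * P = 1\<^sub>m n
      \<and> A' \<in> carrier_mat (n - 1) (n - 1) \<and> B' \<in> carrier_mat (n - 1) (n - 1)
      \<and> X \<in> carrier_mat (n - 1) 1 \<and> Y \<in> carrier_mat 1 (n - 1)
      \<and> Pinv * A * P = four_block_mat A' X (0\<^sub>m 1 (n - 1)) (mat 1 1 (\<lambda>_. a))
      \<and> Pinv * B * P = four_block_mat (mat 1 1 (\<lambda>_. b)) Y (0\<^sub>m (n - 1) 1) B'))"

definition prop_lt :: "nat \<Rightarrow> 'a :: field mat \<Rightarrow> 'a mat \<Rightarrow> bool" where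
  "prop_lt n A B = (\<exists>v l. eigenvector B v l \<and> subspace_dim n (cyclic_subspace n A v) < n)"

definition prop_top :: "nat \<Rightarrow> 'a :: field mat \<Rightarrow> 'a mat \<Rightarrow> bool" where
  "prop_top n A B = (triangulant n A B = 0)"

end

theory Submission
  imports Defs "Jordan_Normal_Form.DL_Rank" "Jordan_Normal_Form.Schur_Decomposition"
begin

lemma (in vectorspace) subspace_fin_dim:
  assumes fd: fin_dim and W: "subspace K W V"
  shows "vectorspace.fin_dim K (vs W)"
proof -
  interpret W: vectorspace K "vs W" using subspace_is_vs[OF W] .
  have sub: "submodule K W V" using W by (simp add: subspace_def)
  have WC: "W \<subseteq> carrier V" using sub by (simp add: submodule_def)
  have li: "\<And>S. S \<subseteq> W \<Longrightarrow> W.lin_indpt S \<Longrightarrow> lin_indpt S"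
    using span_li_not_depend(2)[OF _ sub] by auto
  have bound: "\<And>S. (S \<subseteq> carrier (vs W) \<and> W.lin_indpt S) \<Longrightarrow> finite S \<and> card S \<le> dim"
    using li li_le_dim[OF fd] WC by fastforce
  have e: "{} \<subseteq> carrier (vs W) \<and> W.lin_indpt {}" unfolding W.lin_dep_def by auto
  obtain B where "finite B" "maximal B (\<lambda>S. S \<subseteq> carrier (vs W) \<and> W.lin_indpt S)"
    using maximal_exists[where P="\<lambda>S. S \<subseteq> carrier (vs W) \<and> W.lin_indpt S", OF bound e] by blast
  moreover then have "W.basis B" by (intro W.max_li_is_basis)
  ultimately show ?thesis unfolding W.fin_dim_def W.basis_def by blast
qed

lemma (in vectorspace) subspace_full_dim:
  assumes fd: fin_dim and W: "subspace K W V" and d: "vectorspace.dim K (vs W) = dim"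
  shows "W = carrier V"
proof -
  interpret W: vectorspace K "vs W" using subspace_is_vs[OF W] .
  have sub: "submodule K W V" using W by (simp add: subspace_def)
  have WC: "W \<subseteq> carrier V" using sub by (simp add: submodule_def)
  obtain B where B: "finite B" "W.basis B" using W.finite_basis_exists[OF subspace_fin_dim[OF fd W]] by blast
  have BW: "B \<subseteq> W" using B(2) unfolding W.basis_def by auto
  have liB: "lin_indpt B" using B(2) span_li_not_depend(2)[OF BW sub] unfolding W.basis_def by auto
  have cB: "card B = dim" using W.dim_basis[OF B] d by simp
  have "basis B" using dim_li_is_basis[OF fd B(1) _ liB] BW WC cB by auto
  hence "span B = carrier V" unfolding basis_def by auto
  moreover have "span B \<subseteq> W" using span_is_subset[OF BW sub] .
  ultimately show ?thesis using WC by auto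
qed

lemma (in vectorspace) subspace_le_dim:
  assumes fd: fin_dim and W: "subspace K W V"
  shows "vectorspace.dim K (vs W) \<le> dim"
  using subspace_dim[OF W fd subspace_fin_dim[OF fd W]] .

lemma (in vectorspace) subspace_eq_dim:
  assumes fd: fin_dim and X: "subspace K X V" and Y: "subspace K Y V" and XY: "X \<subseteq> Y"
   and d: "vectorspace.dim K (vs X) = vectorspace.dim K (vs Y)"
  shows "X = Y"
proof -
  interpret Y: vectorspace K "vs Y" using subspace_is_vs[OF Y] .
  have XY': "subspace K X (vs Y)" using nested_subspaces[OF Y X XY] .
  have "X = carrier (vs Y)"
    by (rule Y.subspace_full_dim[OF subspace_fin_dim[OF fd Y] XY'], simp add: d)
  thus ?thesis by simp
qed

lemma sd_le: fixes W :: "'a :: field vec set"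
  shows "is_subspace n W \<Longrightarrow> subspace_dim n W \<le> n"
proof -
  interpret vec_space "TYPE('a)" n .
  show "is_subspace n W \<Longrightarrow> subspace_dim n W \<le> n"
    unfolding is_subspace_def subspace_dim_def using subspace_le_dim[OF fin_dim] dim_is_n by simp
qed
lemma sd_full: fixes W :: "'a :: field vec set"
  shows "is_subspace n W \<Longrightarrow> subspace_dim n W = n \<Longrightarrow> W = carrier_vec n"
proof -
  interpret vec_space "TYPE('a)" n .
  show "is_subspace n W \<Longrightarrow> subspace_dim n W = n \<Longrightarrow> W = carrier_vec n"
    unfolding is_subspace_def subspace_dim_def using subspace_full_dim[OF fin_dim] dim_is_n by simp
qed
lemma sd_eq: fixes X Y :: "'a :: field vec set"
  shows "is_subspace n X \<Longrightarrow> is_subspace n Y \<Longrightarrow> X \<subseteq> Y \<Longrightarrow> subspace_dim n X = subspace_dim n Y \<Longrightarrow> X = Y"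
proof -
  interpret vec_space "TYPE('a)" n .
  show "is_subspace n X \<Longrightarrow> is_subspace n Y \<Longrightarrow> X \<subseteq> Y \<Longrightarrow> subspace_dim n X = subspace_dim n Y \<Longrightarrow> X = Y"
    unfolding is_subspace_def subspace_dim_def using subspace_eq_dim[OF fin_dim] by simp
qed

definition hyp :: "nat \<Rightarrow> 'a :: field vec \<Rightarrow> 'a vec set" where
  "hyp n w = {x \<in> carrier_vec n. w \<bullet> x = 0}"

lemma hyp_linear_map:
  fixes w :: "'a :: field vec"
  assumes w: "w \<in> carrier_vec n"
  shows "linear_map class_ring (module_vec TYPE('a) n) (module_vec TYPE('a) 1) (\<lambda>x. vec 1 (\<lambda>_. w \<bullet> x))"
proof -
  have hom: "(\<lambda>x. vec 1 (\<lambda>_. w \<bullet> x)) \<in> module_hom class_ring (module_vec TYPE('a) n) (module_vec TYPE('a) 1)"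
    unfolding module_hom_def module_vec_simps class_ring_simps
    using w by (auto simp: scalar_prod_add_distrib scalar_prod_smult_distrib)
  show ?thesis unfolding linear_map_def mod_hom_def mod_hom_axioms_def
    using vec_vs vec_module hom by metis
qed

lemma hyp_subspace:
  fixes w :: "'a :: field vec"
  assumes w: "w \<in> carrier_vec n"
  shows "is_subspace n (hyp n w)"
proof -
  interpret T: linear_map class_ring "module_vec TYPE('a) n" "module_vec TYPE('a) 1" "(\<lambda>x. vec 1 (\<lambda>_. w \<bullet> x))"
    using hyp_linear_map[OF w] .
  have "T.kerT = hyp n w" unfolding mod_hom.ker_def[OF T.mod_hom_axioms] hyp_def module_vec_simps
    by (auto simp: vec_eq_iff)
  thus ?thesis using T.kerT_is_subspace unfolding is_subspace_def by simp
qed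

lemma hyp_dim:
  fixes w :: "'a :: field vec"
  assumes w: "w \<in> carrier_vec n" and w0: "w \<noteq> 0\<^sub>v n"
  shows "subspace_dim n (hyp n w) = n - 1"
proof -
  interpret T: linear_map class_ring "module_vec TYPE('a) n" "module_vec TYPE('a) 1" "(\<lambda>x. vec 1 (\<lambda>_. w \<bullet> x))"
    using hyp_linear_map[OF w] .
  interpret VS: vec_space "TYPE('a)" n .
  interpret W1: vec_space "TYPE('a)" 1 .
  have ker: "T.kerT = hyp n w" unfolding mod_hom.ker_def[OF T.mod_hom_axioms] hyp_def module_vec_simps
    by (auto simp: vec_eq_iff)
  obtain i where i: "i < n" "w $ i \<noteq> 0" using w w0 by (metis eq_vecI carrier_vecD index_zero_vec)
  have im: "T.imT = carrier_vec 1"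
  proof
    show "T.imT \<subseteq> carrier_vec 1" unfolding mod_hom.im_def[OF T.mod_hom_axioms] by auto
    show "carrier_vec 1 \<subseteq> T.imT"
    proof
      fix y :: "'a vec" assume y: "y \<in> carrier_vec 1"
      let ?x = "(y $ 0 / w $ i) \<cdot>\<^sub>v unit_vec n i"
      have "w \<bullet> ?x = y $ 0" using i w by (simp add: scalar_prod_smult_distrib)
      hence yy: "y = vec 1 (\<lambda>_. w \<bullet> ?x)" using y by (auto simp: vec_eq_iff)
      have xc: "?x \<in> carrier_vec n" by simp
      show "y \<in> T.imT" unfolding mod_hom.im_def[OF T.mod_hom_axioms] module_vec_simps
        using image_eqI[where f="\<lambda>x. vec 1 (\<lambda>_. w \<bullet> x)", OF yy xc] .
    qed
  qed
  have rn: "vectorspace.dim class_ring ((module_vec TYPE('a) 1)\<lparr>carrier := T.imT\<rparr>)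
      + vectorspace.dim class_ring ((module_vec TYPE('a) n)\<lparr>carrier := T.kerT\<rparr>) = vectorspace.dim class_ring (module_vec TYPE('a) n)"
    using T.rank_nullity[OF VS.fin_dim] by simp
  have "(module_vec TYPE('a) 1)\<lparr>carrier := T.imT\<rparr> = module_vec TYPE('a) 1"
    unfolding im by (simp add: module_vec_def)
  hence "vectorspace.dim class_ring ((module_vec TYPE('a) 1)\<lparr>carrier := T.imT\<rparr>) = 1"
    using W1.dim_is_n by simp
  with rn VS.dim_is_n ker show ?thesis unfolding subspace_dim_def by simp
qed

lemma annihilator_exists:
  fixes bs :: "'a :: field vec list"
  assumes bs: "set bs \<subseteq> carrier_vec n" and len: "length bs < n"
  shows "\<exists>w. w \<in> carrier_vec n \<and> w \<noteq> 0\<^sub>v n \<and> (\<forall>b \<in> set bs. b \<bullet> w = 0)"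
proof -
  define c where "c = (\<lambda>i. if i < length bs then bs ! i else 0\<^sub>v n)"
  define M where "M = mat\<^sub>r n n (\<lambda>i. if i = n - 1 then 0\<^sub>v n else c i)"
  have cc: "c \<in> {0..<n} \<rightarrow> carrier_vec n" unfolding c_def using bs nth_mem by fastforce
  have "det M = 0" unfolding M_def by (rule det_row_0[OF _ cc], insert len, auto)
  moreover have M: "M \<in> carrier_mat n n" unfolding M_def by auto
  ultimately obtain w where w: "w \<in> carrier_vec n" "w \<noteq> 0\<^sub>v n" "M *\<^sub>v w = 0\<^sub>v n"
    using det_0_iff_vec_prod_zero[OF M] by auto
  have "\<forall>b \<in> set bs. b \<bullet> w = 0"
  proof
    fix b assume "b \<in> set bs"
    then obtain i where i: "i < length bs" "b = bs ! i" by (auto simp: in_set_conv_nth)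
    have bi: "bs ! i \<in> carrier_vec n" using i bs nth_mem by blast
    have "row M i = b" unfolding M_def c_def using i len bi
      by (subst row_mat_of_row_fun, auto)
    moreover have "(M *\<^sub>v w) $ i = 0" using w(3) i len by auto
    ultimately show "b \<bullet> w = 0" using i len M by auto
  qed
  thus ?thesis using w by auto
qed

lemma subspace_annihilator:
  fixes W :: "'a :: field vec set"
  assumes W: "is_subspace n W" and d: "subspace_dim n W < n"
  shows "\<exists>w. w \<in> carrier_vec n \<and> w \<noteq> 0\<^sub>v n \<and> (\<forall>x \<in> W. w \<bullet> x = 0)"
proof -
  interpret VS: vec_space "TYPE('a)" n .
  have sub: "VectorSpace.subspace class_ring W (module_vec TYPE('a) n)" using W unfolding is_subspace_def .
  interpret WS: vectorspace class_ring "(module_vec TYPE('a) n)\<lparr>carrier := W\<rparr>"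
    using VS.subspace_is_vs[OF sub] .
  have subm: "submodule class_ring W (module_vec TYPE('a) n)" using sub by (simp add: subspace_def)
  have WC: "W \<subseteq> carrier_vec n" using subm by (simp add: submodule_def module_vec_simps)
  obtain B where B: "finite B" "WS.basis B" using WS.finite_basis_exists[OF VS.subspace_fin_dim[OF VS.fin_dim sub]] by blast
  have BW: "B \<subseteq> W" using B(2) unfolding WS.basis_def by auto
  have cB: "card B = subspace_dim n W" using WS.dim_basis[OF B] unfolding subspace_dim_def by simp
  have spanB: "VS.span B = W" using B(2) VS.span_li_not_depend(1)[OF BW subm] unfolding WS.basis_def by auto
  obtain bs where bs: "set bs = B" "distinct bs" using finite_distinct_list[OF B(1)] by blast
  have lbs: "length bs < n" using distinct_card[OF bs(2)] bs(1) cB d by simp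
  obtain w where w: "w \<in> carrier_vec n" "w \<noteq> 0\<^sub>v n" "\<forall>b \<in> set bs. b \<bullet> w = 0"
    using annihilator_exists[OF _ lbs] bs(1) BW WC by blast
  have hsub: "submodule class_ring (hyp n w) (module_vec TYPE('a) n)"
    using hyp_subspace[OF w(1)] unfolding is_subspace_def subspace_def by auto
  have "B \<subseteq> hyp n w" using w(3) bs(1) BW WC w(1) unfolding hyp_def
    by (auto simp: comm_scalar_prod[of _ n])
  hence "VS.span B \<subseteq> hyp n w" using VS.span_is_subset[OF _ hsub] by auto
  thus ?thesis using spanB w unfolding hyp_def by auto
qed

lemma det_inv:
  fixes A :: "'a :: field mat"
  assumes A: "A \<in> carrier_mat n n" and d: "det A \<noteq> 0"
  shows "\<exists>Ai. Ai \<in> carrier_mat n n \<and> A * Ai = 1\<^sub>m n \<and> Ai * A = 1\<^sub>m n"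
proof -
  have "A \<in> Units (ring_mat TYPE('a) n undefined)" by (rule det_non_zero_imp_unit[OF A d])
  thus ?thesis unfolding Units_def ring_mat_simps by auto
qed

lemma complete_inv:
  fixes v :: "'a :: field vec"
  assumes v: "v \<in> carrier_vec n" and v0: "v \<noteq> 0\<^sub>v n"
  shows "\<exists>Q Qi. Q \<in> carrier_mat n n \<and> Qi \<in> carrier_mat n n \<and> Q * Qi = 1\<^sub>m n \<and> Qi * Q = 1\<^sub>m n
     \<and> col Q 0 = v"
proof -
  interpret VS: vec_space "TYPE('a)" n .
  define b where "b = basis_completion v"
  note bc = VS.basis_completion[OF v v0, folded b_def]
  define Q where "Q = mat_of_cols n b"
  have Q: "Q \<in> carrier_mat n n" unfolding Q_def using bc by (metis mat_of_cols_carrier(1))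
  have cQ: "cols Q = b" unfolding Q_def using bc by simp
  have "VS.rank Q = n" by (rule VS.lin_indpt_full_rank[OF Q], insert bc cQ, auto)
  hence d: "det Q \<noteq> 0" using VS.det_rank_iff[OF Q] by simp
  obtain Qi where Qi: "Qi \<in> carrier_mat n n" "Q * Qi = 1\<^sub>m n" "Qi * Q = 1\<^sub>m n" using det_inv[OF Q d] by blast
  have n0: "n > 0" using v v0 by (cases n, auto)
  have "b ! 0 = v" using bc n0 by (cases b, auto)
  hence "col Q 0 = v" unfolding Q_def using bc n0 v by (subst col_mat_of_cols, auto)
  thus ?thesis using Q Qi by blast
qed

lemma mult_unit_vec_col:
  fixes A :: "'a :: semiring_1 mat"
  assumes A: "A \<in> carrier_mat nr nc" and j: "j < nc"
  shows "A *\<^sub>v unit_vec nc j = col A j"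
proof (rule eq_vecI)
  fix i assume "i < dim_vec (col A j)"
  hence i: "i < nr" using A by simp
  have "row A i \<bullet> unit_vec nc j = row A i $ j" by (rule scalar_prod_right_unit[OF j])
  thus "(A *\<^sub>v unit_vec nc j) $ i = col A j $ i" using i j A by simp
qed (insert A, simp)

lemma conj_back:
  fixes Q Qi B :: "'a :: semiring_1 mat"
  assumes Q: "Q \<in> carrier_mat n n" and Qi: "Qi \<in> carrier_mat n n" and B: "B \<in> carrier_mat n n"
    and QQi: "Q * Qi = 1\<^sub>m n"
  shows "Q * (Qi * B * Q) * Qi = B"
proof -
  have c1: "Qi * B * Q \<in> carrier_mat n n" "Qi * B \<in> carrier_mat n n" using Q Qi B by auto
  have "Q * (Qi * B * Q) * Qi = Q * (Qi * B * Q * Qi)" using assoc_mult_mat[OF Q c1(1) Qi] .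
  also have "Qi * B * Q * Qi = Qi * B * (Q * Qi)" using assoc_mult_mat[OF c1(2) Q Qi] .
  also have "\<dots> = Qi * B" unfolding QQi by (rule right_mult_one_mat[OF c1(2)])
  also have "Q * (Qi * B) = Q * Qi * B" using assoc_mult_mat[OF Q Qi B] by simp
  also have "\<dots> = B" unfolding QQi by (rule left_mult_one_mat[OF B])
  finally show ?thesis .
qed

fun ev_list :: "'a :: comm_ring_1 mat \<Rightarrow> 'a list \<Rightarrow> 'a vec \<Rightarrow> 'a vec" where
  "ev_list B [] x = x"
| "ev_list B (b # bs) x = ev_list B bs (B *\<^sub>v x - b \<cdot>\<^sub>v x)"

lemma ev_list_carrier: "B \<in> carrier_mat n n \<Longrightarrow> x \<in> carrier_vec n \<Longrightarrow> ev_list B bs x \<in> carrier_vec n"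
  by (induct bs arbitrary: x, auto)

lemma ev_list_append: "ev_list B (xs @ [b]) x = B *\<^sub>v (ev_list B xs x) - b \<cdot>\<^sub>v (ev_list B xs x)"
  by (induct xs arbitrary: x, auto)

lemma ev_list_sim:
  fixes B C Q Qi :: "'a :: field mat"
  assumes B: "B \<in> carrier_mat n n" and C: "C \<in> carrier_mat n n" and Q: "Q \<in> carrier_mat n n"
    and Qi: "Qi \<in> carrier_mat n n" and QQi: "Q * Qi = 1\<^sub>m n" and QiQ: "Qi * Q = 1\<^sub>m n"
    and BC: "B = Q * C * Qi"
  shows "x \<in> carrier_vec n \<Longrightarrow> ev_list B bs x = Q *\<^sub>v ev_list C bs (Qi *\<^sub>v x)"
proof (induct bs arbitrary: x)
  case Nil
  have "Q *\<^sub>v (Qi *\<^sub>v x) = (Q * Qi) *\<^sub>v x" by (rule assoc_mult_mat_vec[symmetric, OF Q Qi Nil])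
  also have "\<dots> = x" unfolding QQi using Nil by simp
  finally have eq: "Q *\<^sub>v (Qi *\<^sub>v x) = x" .
  show ?case unfolding ev_list.simps using eq by (rule sym)
next
  case (Cons b bs)
  have "Qi *\<^sub>v (B *\<^sub>v x - b \<cdot>\<^sub>v x) = C *\<^sub>v (Qi *\<^sub>v x) - b \<cdot>\<^sub>v (Qi *\<^sub>v x)"
  proof -
    have CQi: "C * Qi \<in> carrier_mat n n" using C Qi by simp
    have "Qi * B = Qi * (Q * (C * Qi))" unfolding BC using assoc_mult_mat[OF Q C Qi] by simp
    also have "\<dots> = (Qi * Q) * (C * Qi)" using assoc_mult_mat[OF Qi Q CQi] by simp
    also have "\<dots> = C * Qi" unfolding QiQ by (rule left_mult_one_mat[OF CQi])
    finally have QiB: "Qi * B = C * Qi" .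
    have "Qi *\<^sub>v (B *\<^sub>v x) = (Qi * B) *\<^sub>v x" by (rule assoc_mult_mat_vec[symmetric, OF Qi B Cons(2)])
    also have "\<dots> = (C * Qi) *\<^sub>v x" unfolding QiB ..
    also have "\<dots> = C *\<^sub>v (Qi *\<^sub>v x)" by (rule assoc_mult_mat_vec[OF C Qi Cons(2)])
    finally have "Qi *\<^sub>v (B *\<^sub>v x) = C *\<^sub>v (Qi *\<^sub>v x)" .
    moreover have "Qi *\<^sub>v (B *\<^sub>v x - b \<cdot>\<^sub>v x) = Qi *\<^sub>v (B *\<^sub>v x) - Qi *\<^sub>v (b \<cdot>\<^sub>v x)"
      using Qi B Cons(2) by (auto simp: mult_minus_distrib_mat_vec)
    moreover have "Qi *\<^sub>v (b \<cdot>\<^sub>v x) = b \<cdot>\<^sub>v (Qi *\<^sub>v x)" using Qi Cons(2) by (simp add: mult_mat_vec)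
    ultimately show ?thesis by simp
  qed
  moreover have "B *\<^sub>v x - b \<cdot>\<^sub>v x \<in> carrier_vec n" using B Cons(2) by simp
  ultimately show ?case using Cons(1) by simp
qed

definition tl_v :: "nat \<Rightarrow> 'a vec \<Rightarrow> 'a vec" where
  "tl_v m y = vec m (\<lambda>i. y $ Suc i)"

lemma chs:
  fixes B :: "'a :: field mat"
  assumes "B \<in> carrier_mat n n" and "char_poly B = (\<Prod>a\<leftarrow>as. [:- a, 1:])"
  shows "\<exists>bs. length bs = n \<and> (\<forall>x\<in>carrier_vec n. ev_list B bs x = 0\<^sub>v n)"
  using assms
proof (induct n arbitrary: B as)
  case 0
  show ?case by (rule exI[of _ "[]"], auto)
next
  case (Suc m B as)
  let ?n = "Suc m"
  have B: "B \<in> carrier_mat ?n ?n" using Suc(2) .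
  have "degree (char_poly B) = ?n" using degree_monic_char_poly[OF B] by simp
  then obtain a as' where as: "as = a # as'" using Suc(3) by (cases as, auto)
  have "poly (char_poly B) a = 0" unfolding Suc(3) as by simp
  hence "eigenvalue B a" using eigenvalue_root_char_poly[OF B] by simp
  then obtain v where ev: "eigenvector B v a" unfolding eigenvalue_def by blast
  hence v: "v \<in> carrier_vec ?n" "v \<noteq> 0\<^sub>v ?n" "B *\<^sub>v v = a \<cdot>\<^sub>v v"
    unfolding eigenvector_def using B by auto
  obtain Q Qi where Q: "Q \<in> carrier_mat ?n ?n" "Qi \<in> carrier_mat ?n ?n" "Q * Qi = 1\<^sub>m ?n"
    "Qi * Q = 1\<^sub>m ?n" "col Q 0 = v" using complete_inv[OF v(1,2)] by blast
  define C where "C = Qi * B * Q"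
  have C: "C \<in> carrier_mat ?n ?n" unfolding C_def using Q B by auto
  have BC: "B = Q * C * Qi" unfolding C_def using conj_back[OF Q(1,2) B Q(3)] by simp
  have "similar_mat_wit C B Qi Q" by (rule similar_mat_witI[OF Q(4) Q(3) C_def C B Q(2) Q(1)])
  hence cpC: "char_poly C = char_poly B" using char_poly_similar unfolding similar_mat_def by blast
  have Qe: "Q *\<^sub>v unit_vec ?n 0 = v" using mult_unit_vec_col[OF Q(1)] Q(5) by simp
  have Qiv: "Qi *\<^sub>v v = unit_vec ?n 0"
  proof -
    have "Qi *\<^sub>v v = Qi *\<^sub>v (Q *\<^sub>v unit_vec ?n 0)" using Qe by simp
    also have "\<dots> = (Qi * Q) *\<^sub>v unit_vec ?n 0" by (rule assoc_mult_mat_vec[symmetric, OF Q(2) Q(1)], simp)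
    also have "\<dots> = unit_vec ?n 0" unfolding Q(4) by simp
    finally show ?thesis .
  qed
  have colC: "C *\<^sub>v unit_vec ?n 0 = a \<cdot>\<^sub>v unit_vec ?n 0"
  proof -
    have QiB: "Qi * B \<in> carrier_mat ?n ?n" using Q B by simp
    have "C *\<^sub>v unit_vec ?n 0 = (Qi * B) *\<^sub>v (Q *\<^sub>v unit_vec ?n 0)" unfolding C_def
      by (rule assoc_mult_mat_vec[OF QiB Q(1)], simp)
    also have "\<dots> = Qi *\<^sub>v (B *\<^sub>v (Q *\<^sub>v unit_vec ?n 0))"
      by (rule assoc_mult_mat_vec[OF Q(2) B], insert Q, simp)
    also have "\<dots> = Qi *\<^sub>v (a \<cdot>\<^sub>v v)" using Qe v by simp
    also have "\<dots> = a \<cdot>\<^sub>v unit_vec ?n 0" using Q v Qiv by (simp add: mult_mat_vec)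
    finally show ?thesis .
  qed
  have C0: "\<And>i. i < ?n \<Longrightarrow> C $$ (i, 0) = (if i = 0 then a else 0)"
  proof -
    fix i assume i: "i < ?n"
    have "(C *\<^sub>v unit_vec ?n 0) $ i = C $$ (i, 0)"
      using mult_unit_vec_col[OF C, of 0] i C by simp
    thus "C $$ (i, 0) = (if i = 0 then a else 0)" using colC i by (cases "i = 0", auto)
  qed
  define C1 where "C1 = mat 1 1 (\<lambda>_. a)"
  define C2 where "C2 = mat 1 m (\<lambda>(i,j). C $$ (i, j + 1))"
  define C4 where "C4 = mat m m (\<lambda>(i,j). C $$ (i + 1, j + 1))"
  have split: "split_block C 1 1 = (C1, C2, 0\<^sub>m m 1, C4)"
    unfolding split_block_def Let_def C1_def C2_def C4_def using C C0
    by (auto intro!: eq_matI)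
  have C4: "C4 \<in> carrier_mat m m" unfolding C4_def by simp
  have C2: "C2 \<in> carrier_mat 1 m" unfolding C2_def by simp
  have C1: "C1 \<in> carrier_mat 1 1" unfolding C1_def by simp
  have Cblock: "C = four_block_mat C1 C2 (0\<^sub>m m 1) C4"
    using split_block(5)[OF split, of m m] C by auto
  have "char_poly C = char_poly C1 * char_poly C4"
    unfolding Cblock by (rule char_poly_four_block_zeros_col[OF C1 C2 C4])
  also have "char_poly C1 = [: -a, 1 :]"
    by (simp add: C1_def char_poly_defs det_def sign_def)
  finally have "[: -a, 1 :] * char_poly C4 = [: -a, 1 :] * (\<Prod>a\<leftarrow>as'. [:- a, 1:])"
    using cpC Suc(3) as by simp
  hence cp4: "char_poly C4 = (\<Prod>a\<leftarrow>as'. [:- a, 1:])"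
    by (metis mult_cancel_left pCons_eq_0_iff zero_neq_one)
  obtain bs' where bs': "length bs' = m" "\<And>x. x \<in> carrier_vec m \<Longrightarrow> ev_list C4 bs' x = 0\<^sub>v m"
    using Suc(1)[OF C4 cp4] by blast
  have tlC: "\<And>y. y \<in> carrier_vec ?n \<Longrightarrow> tl_v m (C *\<^sub>v y) = C4 *\<^sub>v tl_v m y"
  proof -
    fix y :: "'a vec" assume y: "y \<in> carrier_vec ?n"
    show "tl_v m (C *\<^sub>v y) = C4 *\<^sub>v tl_v m y"
    proof (rule eq_vecI)
      fix i assume "i < dim_vec (C4 *\<^sub>v tl_v m y)"
      hence i: "i < m" using C4 by simp
      have "tl_v m (C *\<^sub>v y) $ i = (\<Sum>j<?n. C $$ (Suc i, j) * y $ j)"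
        unfolding tl_v_def using i C y by (simp add: scalar_prod_def lessThan_atLeast0)
      also have "\<dots> = C $$ (Suc i, 0) * y $ 0 + (\<Sum>j<m. C $$ (Suc i, Suc j) * y $ Suc j)"
        by (subst sum.lessThan_Suc_shift, simp)
      also have "\<dots> = (\<Sum>j<m. C4 $$ (i, j) * tl_v m y $ j)"
        using C0[of "Suc i"] i unfolding C4_def tl_v_def by simp
      also have "\<dots> = (C4 *\<^sub>v tl_v m y) $ i"
        using i C4 by (simp add: scalar_prod_def lessThan_atLeast0 tl_v_def)
      finally show "tl_v m (C *\<^sub>v y) $ i = (C4 *\<^sub>v tl_v m y) $ i" .
    qed (insert C4, simp add: tl_v_def)
  qed
  have tlE: "\<And>y. y \<in> carrier_vec ?n \<Longrightarrow> tl_v m (ev_list C bs' y) = ev_list C4 bs' (tl_v m y)"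
  proof -
    fix y :: "'a vec"
    show "y \<in> carrier_vec ?n \<Longrightarrow> tl_v m (ev_list C bs' y) = ev_list C4 bs' (tl_v m y)"
    proof (induct bs' arbitrary: y)
      case (Cons b bs y)
      have "tl_v m (C *\<^sub>v y - b \<cdot>\<^sub>v y) = tl_v m (C *\<^sub>v y) - b \<cdot>\<^sub>v tl_v m y"
        by (rule eq_vecI, insert Cons(2) C, auto simp: tl_v_def)
      also have "\<dots> = C4 *\<^sub>v tl_v m y - b \<cdot>\<^sub>v tl_v m y" using tlC[OF Cons(2)] by simp
      finally have "tl_v m (C *\<^sub>v y - b \<cdot>\<^sub>v y) = C4 *\<^sub>v tl_v m y - b \<cdot>\<^sub>v tl_v m y" .
      moreover have "C *\<^sub>v y - b \<cdot>\<^sub>v y \<in> carrier_vec ?n" using C Cons(2) by simp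
      ultimately show ?case using Cons(1) by simp
    qed simp
  qed
  show ?case
  proof (rule exI[of _ "bs' @ [a]"], intro conjI ballI)
    show "length (bs' @ [a]) = ?n" using bs' by simp
    fix x :: "'a vec" assume x: "x \<in> carrier_vec ?n"
    define y where "y = Qi *\<^sub>v x"
    have y: "y \<in> carrier_vec ?n" unfolding y_def using Q x by simp
    define z where "z = ev_list C bs' y"
    have z: "z \<in> carrier_vec ?n" unfolding z_def using ev_list_carrier[OF C y] .
    have "tl_v m z = 0\<^sub>v m" unfolding z_def tlE[OF y] by (rule bs'(2), simp add: tl_v_def)
    hence zj: "\<And>j. j < ?n \<Longrightarrow> j \<noteq> 0 \<Longrightarrow> z $ j = 0"
    proof -
      fix j assume j: "j < ?n" "j \<noteq> 0"
      then obtain k where k: "j = Suc k" "k < m" by (cases j, auto)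
      have "tl_v m z $ k = z $ Suc k" unfolding tl_v_def using k by simp
      thus "z $ j = 0" using \<open>tl_v m z = 0\<^sub>v m\<close> k by simp
    qed
    have "C *\<^sub>v z - a \<cdot>\<^sub>v z = 0\<^sub>v ?n"
    proof (rule eq_vecI)
      fix i assume "i < dim_vec (0\<^sub>v ?n :: 'a vec)"
      hence i: "i < ?n" by simp
      have "(C *\<^sub>v z) $ i = (\<Sum>j<?n. C $$ (i, j) * z $ j)"
        using i C z by (simp add: scalar_prod_def lessThan_atLeast0)
      also have "\<dots> = C $$ (i, 0) * z $ 0 + (\<Sum>j<m. C $$ (i, Suc j) * z $ Suc j)"
        by (subst sum.lessThan_Suc_shift, simp)
      also have "\<dots> = C $$ (i, 0) * z $ 0" using zj by simp
      finally have "(C *\<^sub>v z) $ i = C $$ (i, 0) * z $ 0" .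
      thus "(C *\<^sub>v z - a \<cdot>\<^sub>v z) $ i = 0\<^sub>v ?n $ i"
        using C0[OF i] zj[OF i] i C z by auto
    qed (insert z C, simp)
    hence "ev_list C (bs' @ [a]) y = 0\<^sub>v ?n" unfolding ev_list_append z_def[symmetric] .
    moreover have "Q *\<^sub>v 0\<^sub>v ?n = 0\<^sub>v ?n" using Q(1) by (intro eq_vecI, auto)
    ultimately show "ev_list B (bs' @ [a]) x = 0\<^sub>v ?n"
      using ev_list_sim[OF B C Q(1,2,3,4) BC x] Q(1) unfolding y_def by simp
  qed
qed

lemma last_nz: "\<not> P (f 0) \<Longrightarrow> P (f L) \<Longrightarrow> \<exists>m<L. \<not> P (f m) \<and> P (f (Suc m))"
proof (induct L)
  case (Suc L)
  show ?case
  proof (cases "P (f L)")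
    case True
    from Suc(1)[OF Suc(2) True] show ?thesis by (meson less_SucI)
  next
    case False
    thus ?thesis using Suc(3) by auto
  qed
qed simp

lemma vec_minus_zero_eq:
  fixes u v :: "'a :: ab_group_add vec"
  assumes "u \<in> carrier_vec n" "v \<in> carrier_vec n" "u - v = 0\<^sub>v n"
  shows "u = v"
proof (rule eq_vecI)
  fix i assume "i < dim_vec v"
  hence i: "i < n" using assms by simp
  have "(u - v) $ i = 0" using assms(3) i by simp
  moreover have "(u - v) $ i = u $ i - v $ i" using assms(1,2) i by (simp add: index_minus_vec)
  ultimately show "u $ i = v $ i" by simp
qed (insert assms, simp)

lemma eig_in_inv:
  fixes A :: "'a :: field mat"
  assumes A: "A \<in> carrier_mat n n" and cp: "char_poly A = (\<Prod>a\<leftarrow>as. [:- a, 1:])"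
    and x0: "x0 \<in> carrier_vec n" "x0 \<noteq> 0\<^sub>v n" "S x0"
    and cl: "\<And>x g. S x \<Longrightarrow> x \<in> carrier_vec n \<Longrightarrow> S (A *\<^sub>v x - g \<cdot>\<^sub>v x)"
  shows "\<exists>x g. S x \<and> eigenvector A x g"
proof -
  obtain bs where bs: "length bs = n" "\<And>x. x \<in> carrier_vec n \<Longrightarrow> ev_list A bs x = 0\<^sub>v n"
    using chs[OF A cp] by blast
  define f where "f m = ev_list A (take m bs) x0" for m
  have fc: "\<And>m. f m \<in> carrier_vec n" unfolding f_def using ev_list_carrier[OF A x0(1)] .
  have fS: "\<And>m. m \<le> length bs \<Longrightarrow> S (f m)"
  proof -
    fix m show "m \<le> length bs \<Longrightarrow> S (f m)"
    proof (induct m)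
      case 0 thus ?case using x0 unfolding f_def by simp
    next
      case (Suc m)
      have "take (Suc m) bs = take m bs @ [bs ! m]" using Suc(2) by (simp add: take_Suc_conv_app_nth)
      hence "f (Suc m) = A *\<^sub>v f m - (bs ! m) \<cdot>\<^sub>v f m" unfolding f_def by (simp add: ev_list_append)
      thus ?case using cl[OF Suc(1) fc] Suc(2) by simp
    qed
  qed
  have "f (length bs) = 0\<^sub>v n" unfolding f_def using bs(2)[OF x0(1)] by simp
  moreover have "f 0 \<noteq> 0\<^sub>v n" unfolding f_def using x0 by simp
  ultimately obtain m where m: "m < length bs" "f m \<noteq> 0\<^sub>v n" "f (Suc m) = 0\<^sub>v n"
    using last_nz[of "\<lambda>x. x = 0\<^sub>v n" f "length bs"] by blast
  have "take (Suc m) bs = take m bs @ [bs ! m]" using m(1) by (simp add: take_Suc_conv_app_nth)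
  hence "f (Suc m) = A *\<^sub>v f m - (bs ! m) \<cdot>\<^sub>v f m" unfolding f_def by (simp add: ev_list_append)
  hence "A *\<^sub>v f m - (bs ! m) \<cdot>\<^sub>v f m = 0\<^sub>v n" using m(3) by simp
  hence "A *\<^sub>v f m = (bs ! m) \<cdot>\<^sub>v f m" using vec_minus_zero_eq[of "A *\<^sub>v f m" n] fc A by simp
  hence "eigenvector A (f m) (bs ! m)" unfolding eigenvector_def using fc m(2) A by simp
  thus ?thesis using fS[of m] m(1) by auto
qed

definition perpV :: "nat \<Rightarrow> 'a :: field mat \<Rightarrow> 'a mat \<Rightarrow> bool" where
  "perpV n A B = (\<exists>w k v l. eigenvector (transpose_mat A) w k \<and> eigenvector B v l \<and> w \<bullet> v = 0)"

lemma perp_iff: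
  fixes A B :: "'a :: field mat"
  assumes A: "A \<in> carrier_mat n n" and B: "B \<in> carrier_mat n n"
  shows "prop_perp n A B = perpV n A B"
proof
  assume "prop_perp n A B"
  then obtain u k v l where u: "eigencovector A u k" and v: "eigenvector B v l" and uv: "u *\<^sub>v v = 0\<^sub>v 1"
    unfolding prop_perp_def by blast
  have uc: "u \<in> carrier_mat 1 n" and u0: "u \<noteq> 0\<^sub>m 1 n" and uA: "u * A = k \<cdot>\<^sub>m u"
    using u A unfolding eigencovector_def by auto
  define w where "w = row u 0"
  have wc: "w \<in> carrier_vec n" unfolding w_def using uc by auto
  have w0: "w \<noteq> 0\<^sub>v n"
  proof
    assume "w = 0\<^sub>v n"
    hence "u = 0\<^sub>m 1 n" using uc unfolding w_def
      by (intro eq_matI, auto, metis index_row(1) index_zero_vec(1) carrier_matD less_one)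
    thus False using u0 by simp
  qed
  have "transpose_mat A *\<^sub>v w = k \<cdot>\<^sub>v w"
  proof (rule eq_vecI)
    fix j assume "j < dim_vec (k \<cdot>\<^sub>v w)"
    hence j: "j < n" using wc by simp
    have "(transpose_mat A *\<^sub>v w) $ j = col A j \<bullet> w" using A j by simp
    also have "\<dots> = w \<bullet> col A j" using comm_scalar_prod[of "col A j" n w] A wc j by simp
    also have "\<dots> = (u * A) $$ (0, j)" unfolding w_def using uc A j by simp
    also have "\<dots> = k * w $ j" unfolding uA w_def using uc j by simp
    finally show "(transpose_mat A *\<^sub>v w) $ j = (k \<cdot>\<^sub>v w) $ j" using j wc by simp
  qed (insert A wc, simp)
  hence ew: "eigenvector (transpose_mat A) w k" unfolding eigenvector_def using wc w0 A by simp
  have "w \<bullet> v = (u *\<^sub>v v) $ 0" unfolding w_def using uc by simp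
  hence "w \<bullet> v = 0" using uv by simp
  thus "perpV n A B" unfolding perpV_def using ew v by blast
next
  assume "perpV n A B"
  then obtain w k v l where ew: "eigenvector (transpose_mat A) w k" and v: "eigenvector B v l"
    and wv: "w \<bullet> v = 0" unfolding perpV_def by blast
  have wc: "w \<in> carrier_vec n" and w0: "w \<noteq> 0\<^sub>v n" and wA: "transpose_mat A *\<^sub>v w = k \<cdot>\<^sub>v w"
    using ew A unfolding eigenvector_def by auto
  have vc: "v \<in> carrier_vec n" using v B unfolding eigenvector_def by auto
  define u where "u = mat 1 n (\<lambda>(i,j). w $ j)"
  have uc: "u \<in> carrier_mat 1 n" unfolding u_def by simp
  have ru: "row u 0 = w" unfolding u_def using wc by (intro eq_vecI, auto)
  have u0: "u \<noteq> 0\<^sub>m 1 n"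
  proof
    assume "u = 0\<^sub>m 1 n"
    hence "w = row (0\<^sub>m 1 n) 0" using ru by simp
    also have "row (0\<^sub>m 1 n) 0 = (0\<^sub>v n :: 'a vec)" by (intro eq_vecI, auto)
    finally have "w = 0\<^sub>v n" .
    thus False using w0 by simp
  qed
  have "u * A = k \<cdot>\<^sub>m u"
  proof (rule eq_matI)
    fix i j assume "i < dim_row (k \<cdot>\<^sub>m u)" "j < dim_col (k \<cdot>\<^sub>m u)"
    hence i: "i = 0" and j: "j < n" using uc by auto
    have "(u * A) $$ (i, j) = w \<bullet> col A j" using uc A i j ru by simp
    also have "\<dots> = col A j \<bullet> w" using comm_scalar_prod[of "col A j" n w] A wc j by simp
    also have "\<dots> = (transpose_mat A *\<^sub>v w) $ j" using A j by simp
    also have "\<dots> = k * w $ j" unfolding wA using wc j by simp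
    finally show "(u * A) $$ (i, j) = (k \<cdot>\<^sub>m u) $$ (i, j)" using i j uc unfolding u_def by simp
  qed (insert uc A, auto)
  hence eu: "eigencovector A u k" unfolding eigencovector_def using uc u0 A by simp
  have "u *\<^sub>v v = 0\<^sub>v 1"
  proof (rule eq_vecI)
    fix i assume "i < dim_vec (0\<^sub>v 1 :: 'a vec)"
    hence i: "i = 0" by simp
    show "(u *\<^sub>v v) $ i = 0\<^sub>v 1 $ i" using i uc ru wv by simp
  qed (insert uc, simp)
  thus "prop_perp n A B" unfolding prop_perp_def using eu v by blast
qed

lemma pow_Suc_left:
  fixes A :: "'a :: semiring_1 mat"
  assumes A: "A \<in> carrier_mat n n"
  shows "A ^\<^sub>m Suc i = A * A ^\<^sub>m i"
proof (induct i)
  case 0 thus ?case using A by simp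
next
  case (Suc i)
  have "A ^\<^sub>m Suc (Suc i) = A ^\<^sub>m Suc i * A" by simp
  also have "\<dots> = A * A ^\<^sub>m i * A" using Suc by simp
  also have "\<dots> = A * (A ^\<^sub>m i * A)" using assoc_mult_mat[OF A pow_carrier_mat[OF A] A] .
  finally show ?case by simp
qed

lemma pow_Suc_vec:
  fixes A :: "'a :: semiring_1 mat"
  assumes A: "A \<in> carrier_mat n n" and v: "v \<in> carrier_vec n"
  shows "A ^\<^sub>m Suc i *\<^sub>v v = A *\<^sub>v (A ^\<^sub>m i *\<^sub>v v)"
  unfolding pow_Suc_left[OF A] using assoc_mult_mat_vec[OF A pow_carrier_mat[OF A] v] .

lemma sub_to_perp:
  fixes A B :: "'a :: field mat"
  assumes A: "A \<in> carrier_mat n n" and B: "B \<in> carrier_mat n n" and n: "n \<ge> 1"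
    and sub: "prop_sub n A B"
  shows "perpV n A B"
proof -
  obtain W v l where W: "is_subspace n W" and dW: "subspace_dim n W = n - 1"
    and inv: "\<forall>w\<in>W. A *\<^sub>v w \<in> W" and vW: "v \<in> W" and ev: "eigenvector B v l"
    using sub unfolding prop_sub_def by blast
  obtain w where w: "w \<in> carrier_vec n" "w \<noteq> 0\<^sub>v n" "\<forall>x\<in>W. w \<bullet> x = 0"
    using subspace_annihilator[OF W] dW n by auto
  have WC: "W \<subseteq> carrier_vec n" using W unfolding is_subspace_def subspace_def submodule_def
    by (auto simp: module_vec_simps)
  have "W \<subseteq> hyp n w" using WC w(3) unfolding hyp_def by auto
  hence Wh: "W = hyp n w" using sd_eq[OF W hyp_subspace[OF w(1)]] dW hyp_dim[OF w(1,2)] by auto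
  define y where "y = transpose_mat A *\<^sub>v w"
  have yc: "y \<in> carrier_vec n" unfolding y_def using A w by simp
  have yx: "\<And>x. x \<in> hyp n w \<Longrightarrow> y \<bullet> x = 0"
  proof -
    fix x assume x: "x \<in> hyp n w"
    hence xc: "x \<in> carrier_vec n" unfolding hyp_def by auto
    have "A *\<^sub>v x \<in> hyp n w" using inv x Wh by auto
    hence "w \<bullet> (A *\<^sub>v x) = 0" unfolding hyp_def by auto
    thus "y \<bullet> x = 0" unfolding y_def using transpose_vec_mult_scalar[OF A xc w(1)] by simp
  qed
  obtain i where i: "i < n" "w $ i \<noteq> 0" using w by (metis eq_vecI carrier_vecD index_zero_vec)
  define k where "k = y $ i / w $ i"
  have "y = k \<cdot>\<^sub>v w"
  proof (rule eq_vecI)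
    fix j assume "j < dim_vec (k \<cdot>\<^sub>v w)"
    hence j: "j < n" using w by simp
    define x where "x = unit_vec n j - (w $ j / w $ i) \<cdot>\<^sub>v unit_vec n i"
    have xc: "x \<in> carrier_vec n" unfolding x_def by simp
    have "w \<bullet> x = w $ j - (w $ j / w $ i) * w $ i" unfolding x_def using w(1) i j
      by (simp add: scalar_prod_minus_distrib scalar_prod_smult_distrib)
    hence "w \<bullet> x = 0" using i by simp
    hence "y \<bullet> x = 0" using yx xc unfolding hyp_def by auto
    moreover have "y \<bullet> x = y $ j - (w $ j / w $ i) * y $ i" unfolding x_def using yc i j
      by (simp add: scalar_prod_minus_distrib scalar_prod_smult_distrib)
    ultimately have "y $ j = (w $ j / w $ i) * y $ i" by simp
    thus "y $ j = (k \<cdot>\<^sub>v w) $ j" unfolding k_def using j w(1) by simp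
  qed (insert yc w, simp)
  hence "eigenvector (transpose_mat A) w k" unfolding eigenvector_def y_def using w A by simp
  moreover have "w \<bullet> v = 0" using w(3) vW by simp
  ultimately show ?thesis unfolding perpV_def using ev by blast
qed

lemma perp_to_sub:
  fixes A B :: "'a :: field mat"
  assumes A: "A \<in> carrier_mat n n" and B: "B \<in> carrier_mat n n"
    and p: "perpV n A B"
  shows "prop_sub n A B"
proof -
  obtain w k v l where ew: "eigenvector (transpose_mat A) w k" and v: "eigenvector B v l"
    and wv: "w \<bullet> v = 0" using p unfolding perpV_def by blast
  have wc: "w \<in> carrier_vec n" and w0: "w \<noteq> 0\<^sub>v n" and wA: "transpose_mat A *\<^sub>v w = k \<cdot>\<^sub>v w"
    using ew A unfolding eigenvector_def by auto
  have vc: "v \<in> carrier_vec n" using v B unfolding eigenvector_def by auto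
  have inv: "\<forall>x\<in>hyp n w. A *\<^sub>v x \<in> hyp n w"
  proof
    fix x assume "x \<in> hyp n w"
    hence xc: "x \<in> carrier_vec n" and wx: "w \<bullet> x = 0" unfolding hyp_def by auto
    have "w \<bullet> (A *\<^sub>v x) = (k \<cdot>\<^sub>v w) \<bullet> x" using transpose_vec_mult_scalar[OF A xc wc] wA by simp
    also have "\<dots> = 0" using wx wc xc by simp
    finally show "A *\<^sub>v x \<in> hyp n w" unfolding hyp_def using A xc by simp
  qed
  have "v \<in> hyp n w" unfolding hyp_def using vc wv by simp
  thus ?thesis unfolding prop_sub_def using hyp_subspace[OF wc] hyp_dim[OF wc w0] inv v by blast
qed

definition ltV :: "nat \<Rightarrow> 'a :: field mat \<Rightarrow> 'a mat \<Rightarrow> bool" where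
  "ltV n A B = (\<exists>v l w. eigenvector B v l \<and> w \<in> carrier_vec n \<and> w \<noteq> 0\<^sub>v n \<and> (\<forall>i. w \<bullet> (A ^\<^sub>m i *\<^sub>v v) = 0))"

lemma perp_to_ltV:
  fixes A B :: "'a :: field mat"
  assumes A: "A \<in> carrier_mat n n" and B: "B \<in> carrier_mat n n"
    and p: "perpV n A B"
  shows "ltV n A B"
proof -
  obtain w k v l where ew: "eigenvector (transpose_mat A) w k" and v: "eigenvector B v l"
    and wv: "w \<bullet> v = 0" using p unfolding perpV_def by blast
  have wc: "w \<in> carrier_vec n" and w0: "w \<noteq> 0\<^sub>v n" and wA: "transpose_mat A *\<^sub>v w = k \<cdot>\<^sub>v w"
    using ew A unfolding eigenvector_def by auto
  have vc: "v \<in> carrier_vec n" using v B unfolding eigenvector_def by auto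
  have "\<And>x. x \<in> carrier_vec n \<Longrightarrow> w \<bullet> (A ^\<^sub>m i *\<^sub>v x) = k ^ i * (w \<bullet> x)" for i
  proof (induct i)
    case 0 thus ?case using A by simp
  next
    case (Suc i x)
    have "A ^\<^sub>m Suc i *\<^sub>v x = (A ^\<^sub>m i * A) *\<^sub>v x" by simp
    also have "\<dots> = A ^\<^sub>m i *\<^sub>v (A *\<^sub>v x)" by (rule assoc_mult_mat_vec[OF pow_carrier_mat[OF A] A Suc(2)])
    finally have "A ^\<^sub>m Suc i *\<^sub>v x = A ^\<^sub>m i *\<^sub>v (A *\<^sub>v x)" .
    hence "w \<bullet> (A ^\<^sub>m Suc i *\<^sub>v x) = k ^ i * (w \<bullet> (A *\<^sub>v x))" using Suc(1)[of "A *\<^sub>v x"] A Suc(2) by simp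
    also have "w \<bullet> (A *\<^sub>v x) = (k \<cdot>\<^sub>v w) \<bullet> x" using transpose_vec_mult_scalar[OF A Suc(2) wc] wA by simp
    also have "\<dots> = k * (w \<bullet> x)" using wc Suc(2) by simp
    finally show ?case by simp
  qed
  hence "\<forall>i. w \<bullet> (A ^\<^sub>m i *\<^sub>v v) = 0" using vc wv by simp
  thus ?thesis unfolding ltV_def using v wc w0 by blast
qed

lemma pow_mult_vec_carrier[simp]:
  "A \<in> carrier_mat n n \<Longrightarrow> v \<in> carrier_vec n \<Longrightarrow> A ^\<^sub>m k *\<^sub>v v \<in> carrier_vec n"
  using mult_mat_vec_carrier[OF pow_carrier_mat] by blast

lemma sum_div_mod: fixes m n :: nat shows "(\<Sum>t<m*n. f (t div n) (t mod n)) = (\<Sum>j<m. \<Sum>k<n. (f j k :: 'a :: comm_monoid_add))"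
proof -
  have "(\<Sum>t<m*n. f (t div n) (t mod n)) = (\<Sum>j<m. \<Sum>t\<in>{j*n..<j*n+n}. f (t div n) (t mod n))"
    by (rule sum.nat_group[symmetric])
  also have "\<dots> = (\<Sum>j<m. \<Sum>k<n. f j k)"
  proof (rule sum.cong[OF refl])
    fix j
    have im: "{j*n..<j*n+n} = (\<lambda>k. j*n+k) ` {..<n}"
    proof (rule Set.set_eqI, rule iffI)
      fix x assume "x \<in> {j*n..<j*n+n}"
      hence "x = j*n + (x - j*n)" "x - j*n \<in> {..<n}" by auto
      thus "x \<in> (\<lambda>k. j*n+k) ` {..<n}" by blast
    qed auto
    have "(\<Sum>t\<in>{j*n..<j*n+n}. f (t div n) (t mod n)) = (\<Sum>k<n. f ((j*n+k) div n) ((j*n+k) mod n))"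
      unfolding im by (subst sum.reindex, auto simp: inj_on_def)
    also have "\<dots> = (\<Sum>k<n. f j k)" by (rule sum.cong, auto)
    finally show "(\<Sum>t\<in>{j*n..<j*n+n}. f (t div n) (t mod n)) = (\<Sum>k<n. f j k)" .
  qed
  finally show ?thesis .
qed

lemma ltV_to_lt:
  fixes A B :: "'a :: field mat"
  assumes A: "A \<in> carrier_mat n n" and B: "B \<in> carrier_mat n n" and lt: "ltV n A B"
  shows "prop_lt n A B"
proof -
  obtain v l w where ev: "eigenvector B v l" and w: "w \<in> carrier_vec n" "w \<noteq> 0\<^sub>v n"
    "\<forall>i. w \<bullet> (A ^\<^sub>m i *\<^sub>v v) = 0" using lt unfolding ltV_def by blast
  have vc: "v \<in> carrier_vec n" using ev B unfolding eigenvector_def by auto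
  interpret VS: vec_space "TYPE('a)" n .
  define G where "G = {(A ^\<^sub>m k) *\<^sub>v v | k. True}"
  have GC: "G \<subseteq> carrier_vec n" unfolding G_def using mult_mat_vec_carrier[OF pow_carrier_mat[OF A] vc] by auto
  have cyc: "cyclic_subspace n A v = VS.span G" unfolding cyclic_subspace_def G_def ..
  have hsub: "submodule class_ring (hyp n w) (module_vec TYPE('a) n)"
    using hyp_subspace[OF w(1)] unfolding is_subspace_def subspace_def by auto
  have "G \<subseteq> hyp n w" unfolding hyp_def G_def using w(3) mult_mat_vec_carrier[OF pow_carrier_mat[OF A] vc] by auto
  hence sp: "VS.span G \<subseteq> hyp n w" using VS.span_is_subset[OF _ hsub] by auto
  have Ssub: "is_subspace n (VS.span G)" unfolding is_subspace_def using VS.span_is_subspace[OF GC] by simp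
  have "subspace_dim n (VS.span G) \<noteq> n"
  proof
    assume "subspace_dim n (VS.span G) = n"
    hence all: "VS.span G = carrier_vec n" using sd_full[OF Ssub] by simp
    obtain i where i: "i < n" "w $ i \<noteq> 0" using w by (metis eq_vecI carrier_vecD index_zero_vec)
    have "unit_vec n i \<in> hyp n w" using all sp by auto
    hence "w \<bullet> unit_vec n i = 0" unfolding hyp_def by auto
    thus False using i scalar_prod_right_unit[OF i(1)] by simp
  qed
  hence "subspace_dim n (cyclic_subspace n A v) < n" using sd_le[OF Ssub] cyc by simp
  thus ?thesis unfolding prop_lt_def using ev by blast
qed

lemma lt_to_ltV:
  fixes A B :: "'a :: field mat"
  assumes A: "A \<in> carrier_mat n n" and B: "B \<in> carrier_mat n n" and lt: "prop_lt n A B"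
  shows "ltV n A B"
proof -
  obtain v l where ev: "eigenvector B v l" and d: "subspace_dim n (cyclic_subspace n A v) < n"
    using lt unfolding prop_lt_def by blast
  have vc: "v \<in> carrier_vec n" using ev B unfolding eigenvector_def by auto
  interpret VS: vec_space "TYPE('a)" n .
  define G where "G = {(A ^\<^sub>m k) *\<^sub>v v | k. True}"
  have GC: "G \<subseteq> carrier_vec n" unfolding G_def using mult_mat_vec_carrier[OF pow_carrier_mat[OF A] vc] by auto
  have cyc: "cyclic_subspace n A v = VS.span G" unfolding cyclic_subspace_def G_def ..
  have Ssub: "is_subspace n (VS.span G)" unfolding is_subspace_def using VS.span_is_subspace[OF GC] by simp
  obtain w where w: "w \<in> carrier_vec n" "w \<noteq> 0\<^sub>v n" "\<forall>x \<in> VS.span G. w \<bullet> x = 0"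
    using subspace_annihilator[OF Ssub] d cyc by auto
  have "G \<subseteq> VS.span G" using VS.in_own_span[OF GC] .
  hence "\<forall>i. w \<bullet> (A ^\<^sub>m i *\<^sub>v v) = 0" using w(3) unfolding G_def by blast
  thus ?thesis unfolding ltV_def using ev w by blast
qed

definition Qv :: "nat \<Rightarrow> 'a :: comm_ring_1 mat \<Rightarrow> 'a vec \<Rightarrow> 'a mat" where
  "Qv n A v = mat n n (\<lambda>(r,j). (A ^\<^sub>m j *\<^sub>v v) $ r)"

lemma ltV_to_det:
  fixes A B :: "'a :: field mat"
  assumes A: "A \<in> carrier_mat n n" and B: "B \<in> carrier_mat n n" and lt: "ltV n A B"
  shows "\<exists>v l. eigenvector B v l \<and> det (Qv n A v) = 0"
proof -
  obtain v l w where ev: "eigenvector B v l" and w: "w \<in> carrier_vec n" "w \<noteq> 0\<^sub>v n"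
    "\<forall>i. w \<bullet> (A ^\<^sub>m i *\<^sub>v v) = 0" using lt unfolding ltV_def by blast
  have vc: "v \<in> carrier_vec n" using ev B unfolding eigenvector_def by auto
  have Q: "Qv n A v \<in> carrier_mat n n" unfolding Qv_def by simp
  have QT: "transpose_mat (Qv n A v) \<in> carrier_mat n n" using Q by simp
  have "transpose_mat (Qv n A v) *\<^sub>v w = 0\<^sub>v n"
  proof (rule eq_vecI)
    fix j assume "j < dim_vec (0\<^sub>v n :: 'a vec)"
    hence j: "j < n" by simp
    have "col (Qv n A v) j = A ^\<^sub>m j *\<^sub>v v" unfolding Qv_def using j A vc by (intro eq_vecI, auto)
    hence "(transpose_mat (Qv n A v) *\<^sub>v w) $ j = (A ^\<^sub>m j *\<^sub>v v) \<bullet> w" using j Q by simp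
    also have "\<dots> = w \<bullet> (A ^\<^sub>m j *\<^sub>v v)" using comm_scalar_prod[of "A ^\<^sub>m j *\<^sub>v v" n w] w(1) A vc by simp
    finally show "(transpose_mat (Qv n A v) *\<^sub>v w) $ j = 0\<^sub>v n $ j" using w(3) j by simp
  qed (insert Q, simp)
  hence "det (transpose_mat (Qv n A v)) = 0" using det_0_iff_vec_prod_zero[OF QT] w by blast
  hence "det (Qv n A v) = 0" using det_transpose[OF Q] by simp
  thus ?thesis using ev by blast
qed

lemma Qv_kernel:
  fixes A :: "'a :: field mat"
  assumes A: "A \<in> carrier_mat n n" and vc: "v \<in> carrier_vec n" and d: "det (Qv n A v) = 0"
  shows "\<exists>c. c \<in> carrier_vec n \<and> c \<noteq> 0\<^sub>v n \<and> (\<forall>r<n. (\<Sum>j<n. (A ^\<^sub>m j *\<^sub>v v) $ r * c $ j) = 0)"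
proof -
  have Q: "Qv n A v \<in> carrier_mat n n" unfolding Qv_def by simp
  obtain c where c: "c \<in> carrier_vec n" "c \<noteq> 0\<^sub>v n" "Qv n A v *\<^sub>v c = 0\<^sub>v n"
    using det_0_iff_vec_prod_zero[OF Q] d by blast
  have "\<forall>r<n. (\<Sum>j<n. (A ^\<^sub>m j *\<^sub>v v) $ r * c $ j) = 0"
  proof (intro allI impI)
    fix r assume r: "r < n"
    have "(Qv n A v *\<^sub>v c) $ r = (\<Sum>j<n. (A ^\<^sub>m j *\<^sub>v v) $ r * c $ j)"
      unfolding Qv_def using c(1) r by (simp add: scalar_prod_def lessThan_atLeast0)
    thus "(\<Sum>j<n. (A ^\<^sub>m j *\<^sub>v v) $ r * c $ j) = 0" using c(3) r by simp
  qed
  thus ?thesis using c by blast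
qed

lemma det_to_ltV:
  fixes A B :: "'a :: field mat"
  assumes A: "A \<in> carrier_mat n n" and B: "B \<in> carrier_mat n n"
    and ev: "eigenvector B v l" and d: "det (Qv n A v) = 0"
  shows "ltV n A B"
proof -
  have vc: "v \<in> carrier_vec n" and v0: "v \<noteq> 0\<^sub>v n" using ev B unfolding eigenvector_def by auto
  obtain c where c: "c \<in> carrier_vec n" "c \<noteq> 0\<^sub>v n" "\<And>r. r < n \<Longrightarrow> (\<Sum>j<n. (A ^\<^sub>m j *\<^sub>v v) $ r * c $ j) = 0"
    using Qv_kernel[OF A vc d] by blast
  have key: "\<And>w. w \<in> carrier_vec n \<Longrightarrow> (\<Sum>j<n. c $ j * (w \<bullet> (A ^\<^sub>m j *\<^sub>v v))) = 0"
  proof -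
    fix w :: "'a vec" assume w: "w \<in> carrier_vec n"
    have "(\<Sum>j<n. c $ j * (w \<bullet> (A ^\<^sub>m j *\<^sub>v v))) = (\<Sum>j<n. \<Sum>r<n. w $ r * ((A ^\<^sub>m j *\<^sub>v v) $ r * c $ j))"
      using w A vc by (simp add: scalar_prod_def sum_distrib_left lessThan_atLeast0 ac_simps)
    also have "\<dots> = (\<Sum>r<n. \<Sum>j<n. w $ r * ((A ^\<^sub>m j *\<^sub>v v) $ r * c $ j))" by (rule sum.swap)
    also have "\<dots> = (\<Sum>r<n. w $ r * (\<Sum>j<n. (A ^\<^sub>m j *\<^sub>v v) $ r * c $ j))" by (simp add: sum_distrib_left)
    also have "\<dots> = 0" using c(3) by simp
    finally show "(\<Sum>j<n. c $ j * (w \<bullet> (A ^\<^sub>m j *\<^sub>v v))) = 0" .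
  qed
  define D where "D = {j. j < n \<and> c $ j \<noteq> 0}"
  have fD: "finite D" unfolding D_def by simp
  obtain j0 where j0: "j0 < n" "c $ j0 \<noteq> 0" using c by (metis eq_vecI carrier_vecD index_zero_vec)
  have DnE: "D \<noteq> {}" using j0 unfolding D_def by auto
  define d where "d = Max D"
  have "d \<in> D" unfolding d_def using Max_in[OF fD DnE] .
  hence dn: "d < n" and cd: "c $ d \<noteq> 0" unfolding D_def by auto
  have above: "\<And>j. d < j \<Longrightarrow> j < n \<Longrightarrow> c $ j = 0"
  proof (rule ccontr)
    fix j assume "d < j" "j < n" "c $ j \<noteq> 0"
    hence "j \<in> D" unfolding D_def by auto
    hence "j \<le> d" unfolding d_def using Max_ge[OF fD] by auto
    thus False using \<open>d < j\<close> by simp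
  qed
  have key2: "\<And>w. w \<in> carrier_vec n \<Longrightarrow> (\<forall>j<d. w \<bullet> (A ^\<^sub>m j *\<^sub>v v) = 0) \<Longrightarrow> w \<bullet> (A ^\<^sub>m d *\<^sub>v v) = 0"
  proof -
    fix w :: "'a vec" assume w: "w \<in> carrier_vec n" and P: "\<forall>j<d. w \<bullet> (A ^\<^sub>m j *\<^sub>v v) = 0"
    let ?f = "\<lambda>j. c $ j * (w \<bullet> (A ^\<^sub>m j *\<^sub>v v))"
    have "sum ?f {..<n} = ?f d + sum ?f ({..<n} - {d})" using dn by (subst sum.remove[of _ d], auto)
    also have "sum ?f ({..<n} - {d}) = 0"
    proof (rule sum.neutral, intro ballI)
      fix j assume "j \<in> {..<n} - {d}"
      hence "j < n" "j \<noteq> d" by auto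
      thus "?f j = 0" using P above[of j] by (cases "j < d", auto)
    qed
    finally have "?f d = 0" using key[OF w] by simp
    thus "w \<bullet> (A ^\<^sub>m d *\<^sub>v v) = 0" using cd by simp
  qed
  have d0: "d \<noteq> 0"
  proof
    assume d0: "d = 0"
    obtain i where i: "i < n" "v $ i \<noteq> 0" using vc v0 by (metis eq_vecI carrier_vecD index_zero_vec)
    have "unit_vec n i \<bullet> (A ^\<^sub>m 0 *\<^sub>v v) = 0" using key2[of "unit_vec n i"] d0 by simp
    moreover have "A ^\<^sub>m 0 *\<^sub>v v = v" using A vc by simp
    ultimately show False using scalar_prod_left_unit[OF vc i(1)] i by simp
  qed
  have lbs: "length (map (\<lambda>j. A ^\<^sub>m j *\<^sub>v v) [0..<d]) < n" using dn by simp
  obtain w where w: "w \<in> carrier_vec n" "w \<noteq> 0\<^sub>v n"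
    "\<forall>b \<in> set (map (\<lambda>j. A ^\<^sub>m j *\<^sub>v v) [0..<d]). b \<bullet> w = 0"
    using annihilator_exists[OF _ lbs] A vc by fastforce
  have Pw: "\<forall>j<d. w \<bullet> (A ^\<^sub>m j *\<^sub>v v) = 0"
  proof (intro allI impI)
    fix j assume "j < d"
    hence "(A ^\<^sub>m j *\<^sub>v v) \<bullet> w = 0" using w(3) by auto
    thus "w \<bullet> (A ^\<^sub>m j *\<^sub>v v) = 0" using comm_scalar_prod[of "A ^\<^sub>m j *\<^sub>v v" n w] w(1) A vc by simp
  qed
  have inv: "\<And>w. w \<in> carrier_vec n \<Longrightarrow> \<forall>j<d. w \<bullet> (A ^\<^sub>m j *\<^sub>v v) = 0 \<Longrightarrow>
     \<forall>j<d. (transpose_mat A *\<^sub>v w) \<bullet> (A ^\<^sub>m j *\<^sub>v v) = 0"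
  proof (intro allI impI)
    fix w :: "'a vec" and j assume w: "w \<in> carrier_vec n" and P: "\<forall>j<d. w \<bullet> (A ^\<^sub>m j *\<^sub>v v) = 0"
      and j: "j < d"
    have "(transpose_mat A *\<^sub>v w) \<bullet> (A ^\<^sub>m j *\<^sub>v v) = w \<bullet> (A *\<^sub>v (A ^\<^sub>m j *\<^sub>v v))"
      using transpose_vec_mult_scalar[OF A _ w] A vc by simp
    also have "\<dots> = w \<bullet> (A ^\<^sub>m Suc j *\<^sub>v v)" using pow_Suc_vec[OF A vc] by simp
    also have "\<dots> = 0"
    proof (cases "Suc j < d")
      case True thus ?thesis using P by blast
    next
      case False hence "Suc j = d" using j by simp
      show ?thesis unfolding \<open>Suc j = d\<close> by (rule key2[OF w P])
    qed
    finally show "(transpose_mat A *\<^sub>v w) \<bullet> (A ^\<^sub>m j *\<^sub>v v) = 0" .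
  qed
  have all: "\<And>w. w \<in> carrier_vec n \<Longrightarrow> \<forall>j<d. w \<bullet> (A ^\<^sub>m j *\<^sub>v v) = 0 \<Longrightarrow> w \<bullet> (A ^\<^sub>m i *\<^sub>v v) = 0" for i
  proof (induct i)
    case 0 thus ?case using d0 by auto
  next
    case (Suc i w)
    have "w \<bullet> (A ^\<^sub>m Suc i *\<^sub>v v) = w \<bullet> (A *\<^sub>v (A ^\<^sub>m i *\<^sub>v v))" using pow_Suc_vec[OF A vc] by simp
    also have "\<dots> = (transpose_mat A *\<^sub>v w) \<bullet> (A ^\<^sub>m i *\<^sub>v v)"
      using transpose_vec_mult_scalar[OF A _ Suc(2)] A vc by simp
    also have "\<dots> = 0" using Suc(1)[of "transpose_mat A *\<^sub>v w"] inv[OF Suc(2,3)] A Suc(2) by simp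
    finally show ?case .
  qed
  have "\<forall>i. w \<bullet> (A ^\<^sub>m i *\<^sub>v v) = 0" using all[OF w(1) Pw] by blast
  thus ?thesis unfolding ltV_def using ev w by blast
qed

lemma mat_vec_entry_sum:
  fixes M :: "'a :: comm_ring_1 mat"
  assumes M: "M \<in> carrier_mat nr nc" and x: "x \<in> carrier_vec nc" and r: "r < nr"
  shows "(M *\<^sub>v x) $ r = (\<Sum>k<nc. M $$ (r, k) * x $ k)"
  using M x r by (simp add: scalar_prod_def lessThan_atLeast0)

lemma det_to_top:
  fixes A B :: "'a :: field mat"
  assumes A: "A \<in> carrier_mat n n" and B: "B \<in> carrier_mat n n"
    and ev: "eigenvector B v l" and d: "det (Qv n A v) = 0"
  shows "prop_top n A B"
proof -
  have vc: "v \<in> carrier_vec n" and v0: "v \<noteq> 0\<^sub>v n" and Bv: "B *\<^sub>v v = l \<cdot>\<^sub>v v"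
    using ev B unfolding eigenvector_def by auto
  obtain c where c: "c \<in> carrier_vec n" "c \<noteq> 0\<^sub>v n" "\<And>r. r < n \<Longrightarrow> (\<Sum>j<n. (A ^\<^sub>m j *\<^sub>v v) $ r * c $ j) = 0"
    using Qv_kernel[OF A vc d] by blast
  define x where "x = vec (n*n) (\<lambda>t. c $ (t div n) * v $ (t mod n))"
  have xc: "x \<in> carrier_vec (n*n)" unfolding x_def by simp
  obtain j0 where j0: "j0 < n" "c $ j0 \<noteq> 0" using c by (metis eq_vecI carrier_vecD index_zero_vec)
  obtain k0 where k0: "k0 < n" "v $ k0 \<noteq> 0" using vc v0 by (metis eq_vecI carrier_vecD index_zero_vec)
  have t0: "j0 * n + k0 < n * n"
  proof -
    have "j0 * n + k0 < j0 * n + n" using k0 by simp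
    also have "\<dots> = Suc j0 * n" by simp
    also have "\<dots> \<le> n * n" using j0 by (intro mult_le_mono1, simp)
    finally show ?thesis .
  qed
  have "x $ (j0 * n + k0) = c $ j0 * v $ k0" unfolding x_def using t0 k0 by simp
  hence x0: "x \<noteq> 0\<^sub>v (n*n)" using t0 j0 k0 by auto
  define M where "M = triangulant_mat n A B"
  have M: "M \<in> carrier_mat (n*n) (n*n)" unfolding M_def triangulant_mat_def by simp
  have "M *\<^sub>v x = 0\<^sub>v (n*n)"
  proof (rule eq_vecI)
    fix r assume "r < dim_vec (0\<^sub>v (n*n) :: 'a vec)"
    hence r: "r < n * n" by simp
    define i where "i = r div n"
    define q where "q = r mod n"
    have n0: "n > 0" using r by (cases n, auto)
    have q: "q < n" unfolding q_def using n0 by simp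
    have "(M *\<^sub>v x) $ r = (\<Sum>t<n*n. M $$ (r, t) * x $ t)" by (rule mat_vec_entry_sum[OF M xc r])
    also have "\<dots> = (\<Sum>t<n*n. (A ^\<^sub>m (t div n) * B ^\<^sub>m i) $$ (q, t mod n) * (c $ (t div n) * v $ (t mod n)))"
      by (rule sum.cong, insert r, auto simp: M_def triangulant_mat_def x_def i_def q_def)
    also have "\<dots> = (\<Sum>j<n. \<Sum>k<n. (A ^\<^sub>m j * B ^\<^sub>m i) $$ (q, k) * (c $ j * v $ k))"
      by (rule sum_div_mod)
    also have "\<dots> = (\<Sum>j<n. c $ j * (l ^ i * (A ^\<^sub>m j *\<^sub>v v) $ q))"
    proof (rule sum.cong[OF refl])
      fix j
      have AB: "A ^\<^sub>m j * B ^\<^sub>m i \<in> carrier_mat n n" using mult_carrier_mat[OF pow_carrier_mat[OF A] pow_carrier_mat[OF B]] .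
      have "(A ^\<^sub>m j * B ^\<^sub>m i) *\<^sub>v v = A ^\<^sub>m j *\<^sub>v (B ^\<^sub>m i *\<^sub>v v)"
        by (rule assoc_mult_mat_vec[OF pow_carrier_mat[OF A] pow_carrier_mat[OF B] vc])
      also have "B ^\<^sub>m i *\<^sub>v v = l ^ i \<cdot>\<^sub>v v" by (rule eigenvector_pow[OF B ev])
      also have "A ^\<^sub>m j *\<^sub>v (l ^ i \<cdot>\<^sub>v v) = l ^ i \<cdot>\<^sub>v (A ^\<^sub>m j *\<^sub>v v)"
        by (rule mult_mat_vec[OF pow_carrier_mat[OF A] vc])
      finally have "((A ^\<^sub>m j * B ^\<^sub>m i) *\<^sub>v v) $ q = l ^ i * (A ^\<^sub>m j *\<^sub>v v) $ q" using q A vc by simp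
      moreover have "((A ^\<^sub>m j * B ^\<^sub>m i) *\<^sub>v v) $ q = (\<Sum>k<n. (A ^\<^sub>m j * B ^\<^sub>m i) $$ (q, k) * v $ k)"
        by (rule mat_vec_entry_sum[OF AB vc q])
      ultimately have "(\<Sum>k<n. (A ^\<^sub>m j * B ^\<^sub>m i) $$ (q, k) * v $ k) = l ^ i * (A ^\<^sub>m j *\<^sub>v v) $ q" by simp
      hence "c $ j * (\<Sum>k<n. (A ^\<^sub>m j * B ^\<^sub>m i) $$ (q, k) * v $ k) = c $ j * (l ^ i * (A ^\<^sub>m j *\<^sub>v v) $ q)" by simp
      thus "(\<Sum>k<n. (A ^\<^sub>m j * B ^\<^sub>m i) $$ (q, k) * (c $ j * v $ k)) = c $ j * (l ^ i * (A ^\<^sub>m j *\<^sub>v v) $ q)"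
        by (simp add: sum_distrib_left ac_simps)
    qed
    also have "\<dots> = l ^ i * (\<Sum>j<n. (A ^\<^sub>m j *\<^sub>v v) $ q * c $ j)" by (simp add: sum_distrib_left ac_simps)
    also have "\<dots> = 0" using c(3)[OF q] by simp
    finally show "(M *\<^sub>v x) $ r = 0\<^sub>v (n*n) $ r" using r by simp
  qed (insert M, simp)
  hence "det M = 0" using det_0_iff_vec_prod_zero[OF M] xc x0 by blast
  thus ?thesis unfolding prop_top_def triangulant_def M_def .
qed

lemma ltV_to_perp:
  fixes A B :: "'a :: field mat"
  assumes A: "A \<in> carrier_mat n n" and B: "B \<in> carrier_mat n n"
    and sp: "char_poly_splits A" and lt: "ltV n A B"
  shows "perpV n A B"
proof -
  obtain v l w where ev: "eigenvector B v l" and w: "w \<in> carrier_vec n" "w \<noteq> 0\<^sub>v n"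
    "\<forall>i. w \<bullet> (A ^\<^sub>m i *\<^sub>v v) = 0" using lt unfolding ltV_def by blast
  have vc: "v \<in> carrier_vec n" using ev B unfolding eigenvector_def by auto
  obtain as where cp: "char_poly A = (\<Prod>a\<leftarrow>as. [:- a, 1:])" using sp unfolding char_poly_splits_def by blast
  have AT: "transpose_mat A \<in> carrier_mat n n" using A by simp
  have cpT: "char_poly (transpose_mat A) = (\<Prod>a\<leftarrow>as. [:- a, 1:])" using cp char_poly_transpose_mat[OF A] by simp
  let ?S = "\<lambda>x. \<forall>i. x \<bullet> (A ^\<^sub>m i *\<^sub>v v) = 0"
  have cl: "\<And>x g. ?S x \<Longrightarrow> x \<in> carrier_vec n \<Longrightarrow> ?S (transpose_mat A *\<^sub>v x - g \<cdot>\<^sub>v x)"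
  proof
    fix x g i assume S: "?S x" and x: "x \<in> carrier_vec n"
    have c1: "transpose_mat A *\<^sub>v x \<in> carrier_vec n" using AT x by simp
    have "(transpose_mat A *\<^sub>v x - g \<cdot>\<^sub>v x) \<bullet> (A ^\<^sub>m i *\<^sub>v v)
       = (transpose_mat A *\<^sub>v x) \<bullet> (A ^\<^sub>m i *\<^sub>v v) - (g \<cdot>\<^sub>v x) \<bullet> (A ^\<^sub>m i *\<^sub>v v)"
      by (rule minus_scalar_prod_distrib[OF c1 _ pow_mult_vec_carrier[OF A vc]], insert x, simp)
    also have "(transpose_mat A *\<^sub>v x) \<bullet> (A ^\<^sub>m i *\<^sub>v v) = x \<bullet> (A *\<^sub>v (A ^\<^sub>m i *\<^sub>v v))"
      by (rule transpose_vec_mult_scalar[OF A pow_mult_vec_carrier[OF A vc] x])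
    also have "\<dots> = x \<bullet> (A ^\<^sub>m Suc i *\<^sub>v v)" using pow_Suc_vec[OF A vc] by simp
    also have "\<dots> = 0" using S by blast
    also have "(g \<cdot>\<^sub>v x) \<bullet> (A ^\<^sub>m i *\<^sub>v v) = g * (x \<bullet> (A ^\<^sub>m i *\<^sub>v v))"
      using x A vc by simp
    also have "\<dots> = 0" using S by simp
    finally show "(transpose_mat A *\<^sub>v x - g \<cdot>\<^sub>v x) \<bullet> (A ^\<^sub>m i *\<^sub>v v) = 0" by simp
  qed
  obtain x g where x: "?S x" "eigenvector (transpose_mat A) x g"
    using eig_in_inv[OF AT cpT w(1) w(2) w(3) cl] by blast
  have "x \<bullet> v = 0" using x(1)[rule_format, of 0] A vc by simp
  thus ?thesis unfolding perpV_def using x(2) ev by blast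
qed

lemma eigencovector_exists:
  fixes A :: "'a :: field mat"
  assumes A: "A \<in> carrier_mat n n" and n: "n \<ge> 1" and sp: "char_poly_splits A"
  shows "\<exists>u g. eigenvector (transpose_mat A) u g"
proof -
  obtain as where cp: "char_poly A = (\<Prod>a\<leftarrow>as. [:- a, 1:])" using sp unfolding char_poly_splits_def by blast
  have AT: "transpose_mat A \<in> carrier_mat n n" using A by simp
  have cpT: "char_poly (transpose_mat A) = (\<Prod>a\<leftarrow>as. [:- a, 1:])" using cp char_poly_transpose_mat[OF A] by simp
  have "unit_vec n 0 \<noteq> 0\<^sub>v n" using n by simp
  from eig_in_inv[OF AT cpT unit_vec_carrier this, of "\<lambda>_. True"] show ?thesis by blast
qed

definition GG :: "nat \<Rightarrow> 'a :: comm_ring_1 mat \<Rightarrow> 'a mat \<Rightarrow> (nat \<Rightarrow> 'a vec) \<Rightarrow> nat \<Rightarrow> nat \<Rightarrow> 'a" where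
  "GG n A B z i q = (\<Sum>j<n. ((A ^\<^sub>m j * B ^\<^sub>m i) *\<^sub>v z j) $ q)"

definition stepf :: "'a :: comm_ring_1 mat \<Rightarrow> 'a \<Rightarrow> (nat \<Rightarrow> 'a vec) \<Rightarrow> nat \<Rightarrow> 'a vec" where
  "stepf B b z = (\<lambda>j. B *\<^sub>v z j - b \<cdot>\<^sub>v z j)"

lemma GG_step:
  fixes A B :: "'a :: field mat"
  assumes A: "A \<in> carrier_mat n n" and B: "B \<in> carrier_mat n n"
    and z: "\<And>j. j < n \<Longrightarrow> z j \<in> carrier_vec n" and q: "q < n"
  shows "GG n A B (stepf B b z) i q = GG n A B z (Suc i) q - b * GG n A B z i q"
proof -
  have "GG n A B (stepf B b z) i q = (\<Sum>j<n. ((A ^\<^sub>m j * B ^\<^sub>m Suc i) *\<^sub>v z j) $ q - b * ((A ^\<^sub>m j * B ^\<^sub>m i) *\<^sub>v z j) $ q)"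
    unfolding GG_def stepf_def
  proof (rule sum.cong[OF refl])
    fix j assume "j \<in> {..<n}"
    hence zj: "z j \<in> carrier_vec n" using z by auto
    have AB: "A ^\<^sub>m j * B ^\<^sub>m i \<in> carrier_mat n n" using mult_carrier_mat[OF pow_carrier_mat[OF A] pow_carrier_mat[OF B]] .
    have "(A ^\<^sub>m j * B ^\<^sub>m i) *\<^sub>v (B *\<^sub>v z j - b \<cdot>\<^sub>v z j)
        = (A ^\<^sub>m j * B ^\<^sub>m i) *\<^sub>v (B *\<^sub>v z j) - (A ^\<^sub>m j * B ^\<^sub>m i) *\<^sub>v (b \<cdot>\<^sub>v z j)"
      by (rule mult_minus_distrib_mat_vec[OF AB], insert B zj, auto)
    also have "(A ^\<^sub>m j * B ^\<^sub>m i) *\<^sub>v (B *\<^sub>v z j) = ((A ^\<^sub>m j * B ^\<^sub>m i) * B) *\<^sub>v z j"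
      by (rule assoc_mult_mat_vec[symmetric, OF AB B zj])
    also have "(A ^\<^sub>m j * B ^\<^sub>m i) * B = A ^\<^sub>m j * B ^\<^sub>m Suc i"
      using assoc_mult_mat[OF pow_carrier_mat[OF A] pow_carrier_mat[OF B] B] by simp
    also have "(A ^\<^sub>m j * B ^\<^sub>m i) *\<^sub>v (b \<cdot>\<^sub>v z j) = b \<cdot>\<^sub>v ((A ^\<^sub>m j * B ^\<^sub>m i) *\<^sub>v z j)"
      by (rule mult_mat_vec[OF AB zj])
    finally show "((A ^\<^sub>m j * B ^\<^sub>m i) *\<^sub>v (B *\<^sub>v z j - b \<cdot>\<^sub>v z j)) $ q
      = ((A ^\<^sub>m j * B ^\<^sub>m Suc i) *\<^sub>v z j) $ q - b * ((A ^\<^sub>m j * B ^\<^sub>m i) *\<^sub>v z j) $ q"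
      using q AB zj A B by simp
  qed
  also have "\<dots> = GG n A B z (Suc i) q - b * GG n A B z i q"
    unfolding GG_def by (simp add: sum_subtractf sum_distrib_left)
  finally show ?thesis .
qed

lemma top_to_family:
  fixes A B :: "'a :: field mat"
  assumes A: "A \<in> carrier_mat n n" and B: "B \<in> carrier_mat n n" and top: "prop_top n A B"
  shows "\<exists>y. (\<forall>j<n. y j \<in> carrier_vec n) \<and> (\<exists>j<n. y j \<noteq> 0\<^sub>v n) \<and> (\<forall>i<n. \<forall>q<n. GG n A B y i q = 0)"
proof -
  define M where "M = triangulant_mat n A B"
  have M: "M \<in> carrier_mat (n*n) (n*n)" unfolding M_def triangulant_mat_def by simp
  obtain x where x: "x \<in> carrier_vec (n*n)" "x \<noteq> 0\<^sub>v (n*n)" "M *\<^sub>v x = 0\<^sub>v (n*n)"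
    using det_0_iff_vec_prod_zero[OF M] top unfolding prop_top_def triangulant_def M_def by blast
  define y where "y = (\<lambda>j. vec n (\<lambda>k. x $ (j * n + k)))"
  have yc: "\<forall>j<n. y j \<in> carrier_vec n" unfolding y_def by simp
  obtain t where t: "t < n * n" "x $ t \<noteq> 0" using x by (metis eq_vecI carrier_vecD index_zero_vec)
  have n0: "n > 0" using t by (cases n, auto)
  have "t div n < n" using t by (simp add: less_mult_imp_div_less)
  moreover have "y (t div n) $ (t mod n) = x $ t" unfolding y_def using n0 by simp
  ultimately have ynz: "\<exists>j<n. y j \<noteq> 0\<^sub>v n" using t n0 by (metis index_zero_vec(1) mod_less_divisor)
  have "\<forall>i<n. \<forall>q<n. GG n A B y i q = 0"
  proof (intro allI impI)
    fix i q assume i: "i < n" and q: "q < n"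
    define r where "r = i * n + q"
    have r: "r < n * n"
    proof -
      have "i * n + q < i * n + n" using q by simp
      also have "\<dots> = Suc i * n" by simp
      also have "\<dots> \<le> n * n" using i by (intro mult_le_mono1, simp)
      finally show ?thesis unfolding r_def .
    qed
    have rdm: "r div n = i" "r mod n = q" unfolding r_def using q by auto
    have "0 = (M *\<^sub>v x) $ r" using x(3) r by simp
    also have "\<dots> = (\<Sum>t<n*n. M $$ (r, t) * x $ t)" by (rule mat_vec_entry_sum[OF M x(1) r])
    also have "\<dots> = (\<Sum>t<n*n. (A ^\<^sub>m (t div n) * B ^\<^sub>m i) $$ (q, t mod n) * y (t div n) $ (t mod n))"
    proof (rule sum.cong[OF refl])
      fix t assume "t \<in> {..<n * n}"
      hence tt: "t < n * n" by simp
      have "t div n * n + t mod n = t" by simp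
      hence "y (t div n) $ (t mod n) = x $ t" unfolding y_def using n0 by simp
      thus "M $$ (r, t) * x $ t = (A ^\<^sub>m (t div n) * B ^\<^sub>m i) $$ (q, t mod n) * y (t div n) $ (t mod n)"
        unfolding M_def triangulant_mat_def using r tt rdm by simp
    qed
    also have "\<dots> = (\<Sum>j<n. \<Sum>k<n. (A ^\<^sub>m j * B ^\<^sub>m i) $$ (q, k) * y j $ k)"
      by (rule sum_div_mod)
    also have "\<dots> = GG n A B y i q" unfolding GG_def
    proof (rule sum.cong[OF refl])
      fix j assume "j \<in> {..<n}"
      hence yj: "y j \<in> carrier_vec n" using yc by auto
      have AB: "A ^\<^sub>m j * B ^\<^sub>m i \<in> carrier_mat n n" using mult_carrier_mat[OF pow_carrier_mat[OF A] pow_carrier_mat[OF B]] .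
      show "(\<Sum>k<n. (A ^\<^sub>m j * B ^\<^sub>m i) $$ (q, k) * y j $ k) = ((A ^\<^sub>m j * B ^\<^sub>m i) *\<^sub>v y j) $ q"
        by (rule mat_vec_entry_sum[OF AB yj q, symmetric])
    qed
    finally show "GG n A B y i q = 0" by simp
  qed
  thus ?thesis using yc ynz by blast
qed

lemma family_eigen:
  fixes A B :: "'a :: field mat"
  assumes A: "A \<in> carrier_mat n n" and B: "B \<in> carrier_mat n n"
    and cpB: "char_poly B = (\<Prod>a\<leftarrow>as. [:- a, 1:])"
    and yc: "\<forall>j<n. y j \<in> carrier_vec n" and ynz: "\<exists>j<n. y j \<noteq> 0\<^sub>v n"
    and yG: "\<forall>i<n. \<forall>q<n. GG n A B y i q = 0"
  shows "\<exists>z b. (\<forall>j<n. z j \<in> carrier_vec n \<and> B *\<^sub>v z j = b \<cdot>\<^sub>v z j) \<and> (\<exists>j<n. z j \<noteq> 0\<^sub>v n)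
     \<and> (\<forall>q<n. (\<Sum>j<n. (A ^\<^sub>m j *\<^sub>v z j) $ q) = 0)"
proof -
  obtain bs where bs: "length bs = n" "\<And>x. x \<in> carrier_vec n \<Longrightarrow> ev_list B bs x = 0\<^sub>v n"
    using chs[OF B cpB] by blast
  define f where "f m = (\<lambda>j. ev_list B (take m bs) (y j))" for m
  have fc: "\<And>m j. j < n \<Longrightarrow> f m j \<in> carrier_vec n" unfolding f_def using ev_list_carrier[OF B] yc by auto
  have fstep: "\<And>m. m < n \<Longrightarrow> f (Suc m) = stepf B (bs ! m) (f m)"
  proof -
    fix m assume m: "m < n"
    have "take (Suc m) bs = take m bs @ [bs ! m]" using m bs(1) by (simp add: take_Suc_conv_app_nth)
    thus "f (Suc m) = stepf B (bs ! m) (f m)" unfolding f_def stepf_def by (simp add: ev_list_append)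
  qed
  have fP: "\<And>m. m \<le> n \<Longrightarrow> \<forall>i<n - m. \<forall>q<n. GG n A B (f m) i q = 0"
  proof -
    fix m show "m \<le> n \<Longrightarrow> \<forall>i<n - m. \<forall>q<n. GG n A B (f m) i q = 0"
    proof (induct m)
      case 0
      have "f 0 = y" unfolding f_def by simp
      thus ?case using yG by simp
    next
      case (Suc m)
      show ?case
      proof (intro allI impI)
        fix i q assume i: "i < n - Suc m" and q: "q < n"
        have "GG n A B (f (Suc m)) i q = GG n A B (f m) (Suc i) q - (bs ! m) * GG n A B (f m) i q"
          unfolding fstep[of m, OF Suc_le_lessD[OF Suc(2)]]
          by (rule GG_step[OF A B fc q])
        also have "\<dots> = 0" using Suc(1) Suc(2) i q by simp
        finally show "GG n A B (f (Suc m)) i q = 0" .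
      qed
    qed
  qed
  let ?P = "\<lambda>g. \<not> (\<exists>j<n. g j \<noteq> 0\<^sub>v n)"
  have P0: "\<not> ?P (f 0)" unfolding f_def using ynz by simp
  have Pn: "?P (f n)" unfolding f_def using bs yc by simp
  obtain m where m: "m < n" "\<not> ?P (f m)" "?P (f (Suc m))" using last_nz[of ?P f n, OF P0 Pn] by blast
  define b where "b = bs ! m"
  have ev: "\<forall>j<n. f m j \<in> carrier_vec n \<and> B *\<^sub>v f m j = b \<cdot>\<^sub>v f m j"
  proof (intro allI impI conjI)
    fix j assume j: "j < n"
    show fj: "f m j \<in> carrier_vec n" using fc[OF j] .
    have "stepf B b (f m) j = 0\<^sub>v n" using m(3) j fstep[OF m(1)] unfolding b_def by auto
    hence "B *\<^sub>v f m j - b \<cdot>\<^sub>v f m j = 0\<^sub>v n" unfolding stepf_def by simp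
    thus "B *\<^sub>v f m j = b \<cdot>\<^sub>v f m j" using vec_minus_zero_eq[of "B *\<^sub>v f m j" n] fj B by simp
  qed
  have "\<forall>q<n. (\<Sum>j<n. (A ^\<^sub>m j *\<^sub>v f m j) $ q) = 0"
  proof (intro allI impI)
    fix q assume q: "q < n"
    have "GG n A B (f m) 0 q = 0" using fP[of m] m(1) q by simp
    moreover have "GG n A B (f m) 0 q = (\<Sum>j<n. (A ^\<^sub>m j *\<^sub>v f m j) $ q)" unfolding GG_def
      by (rule sum.cong[OF refl], insert A B, simp)
    ultimately show "(\<Sum>j<n. (A ^\<^sub>m j *\<^sub>v f m j) $ q) = 0" by simp
  qed
  thus ?thesis using ev m(2) by blast
qed

lemma eig_lincomb:
  fixes B :: "'a :: field mat"
  assumes B: "B \<in> carrier_mat n n" and x: "x \<in> carrier_vec n" and y: "y \<in> carrier_vec n"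
    and Bx: "B *\<^sub>v x = b \<cdot>\<^sub>v x" and By: "B *\<^sub>v y = b \<cdot>\<^sub>v y"
  shows "B *\<^sub>v (p \<cdot>\<^sub>v x - s \<cdot>\<^sub>v y) = b \<cdot>\<^sub>v (p \<cdot>\<^sub>v x - s \<cdot>\<^sub>v y)"
proof (rule eq_vecI)
  fix r assume "r < dim_vec (b \<cdot>\<^sub>v (p \<cdot>\<^sub>v x - s \<cdot>\<^sub>v y))"
  hence r: "r < n" using x y by simp
  have rB: "row B r \<in> carrier_vec n" using B r by simp
  have "(B *\<^sub>v (p \<cdot>\<^sub>v x - s \<cdot>\<^sub>v y)) $ r = row B r \<bullet> (p \<cdot>\<^sub>v x - s \<cdot>\<^sub>v y)" using B r by simp
  also have "\<dots> = row B r \<bullet> (p \<cdot>\<^sub>v x) - row B r \<bullet> (s \<cdot>\<^sub>v y)"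
    by (rule scalar_prod_minus_distrib[OF rB], insert x y, auto)
  also have "\<dots> = p * (row B r \<bullet> x) - s * (row B r \<bullet> y)" using rB x y by simp
  also have "row B r \<bullet> x = (B *\<^sub>v x) $ r" using B r by simp
  also have "row B r \<bullet> y = (B *\<^sub>v y) $ r" using B r by simp
  finally show "(B *\<^sub>v (p \<cdot>\<^sub>v x - s \<cdot>\<^sub>v y)) $ r = (b \<cdot>\<^sub>v (p \<cdot>\<^sub>v x - s \<cdot>\<^sub>v y)) $ r"
    unfolding Bx By using r x y by (simp add: algebra_simps)
qed (insert B x y, simp)

lemma top_to_perp:
  fixes A B :: "'a :: field mat"
  assumes A: "A \<in> carrier_mat n n" and B: "B \<in> carrier_mat n n" and n: "n \<ge> 1"
    and spA: "char_poly_splits A" and spB: "char_poly_splits B" and top: "prop_top n A B"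
  shows "perpV n A B"
proof -
  obtain y where y: "\<forall>j<n. y j \<in> carrier_vec n" "\<exists>j<n. y j \<noteq> 0\<^sub>v n" "\<forall>i<n. \<forall>q<n. GG n A B y i q = 0"
    using top_to_family[OF A B top] by blast
  obtain as where cpB: "char_poly B = (\<Prod>a\<leftarrow>as. [:- a, 1:])" using spB unfolding char_poly_splits_def by blast
  obtain z b where z: "\<forall>j<n. z j \<in> carrier_vec n \<and> B *\<^sub>v z j = b \<cdot>\<^sub>v z j" "\<exists>j<n. z j \<noteq> 0\<^sub>v n"
    "\<forall>q<n. (\<Sum>j<n. (A ^\<^sub>m j *\<^sub>v z j) $ q) = 0"
    using family_eigen[OF A B cpB y] by blast
  obtain u g where eu: "eigenvector (transpose_mat A) u g" using eigencovector_exists[OF A n spA] by blast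
  have uc: "u \<in> carrier_vec n" using eu A unfolding eigenvector_def by auto
  obtain j0 where j0: "j0 < n" "z j0 \<noteq> 0\<^sub>v n" using z(2) by blast
  define v where "v = z j0"
  have vc: "v \<in> carrier_vec n" and Bv: "B *\<^sub>v v = b \<cdot>\<^sub>v v" using z(1) j0 unfolding v_def by auto
  have evz: "\<And>x. x \<in> carrier_vec n \<Longrightarrow> x \<noteq> 0\<^sub>v n \<Longrightarrow> B *\<^sub>v x = b \<cdot>\<^sub>v x \<Longrightarrow> eigenvector B x b"
    unfolding eigenvector_def using B by simp
  show ?thesis
  proof (cases "\<exists>j<n. z j \<noteq> 0\<^sub>v n \<and> u \<bullet> z j = 0")
    case True
    then obtain j where j: "j < n" "z j \<noteq> 0\<^sub>v n" "u \<bullet> z j = 0" by blast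
    have "eigenvector B (z j) b" using evz j z(1) by auto
    thus ?thesis unfolding perpV_def using eu j(3) by blast
  next
    case False
    hence uv: "u \<bullet> v \<noteq> 0" using j0 unfolding v_def by blast
    show ?thesis
    proof (cases "\<exists>j<n. (u \<bullet> v) \<cdot>\<^sub>v z j - (u \<bullet> z j) \<cdot>\<^sub>v v \<noteq> 0\<^sub>v n")
      case True
      then obtain j where j: "j < n" and d0: "(u \<bullet> v) \<cdot>\<^sub>v z j - (u \<bullet> z j) \<cdot>\<^sub>v v \<noteq> 0\<^sub>v n" by blast
      define d where "d = (u \<bullet> v) \<cdot>\<^sub>v z j - (u \<bullet> z j) \<cdot>\<^sub>v v"
      have zj: "z j \<in> carrier_vec n" "B *\<^sub>v z j = b \<cdot>\<^sub>v z j" using z(1) j by auto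
      have dc: "d \<in> carrier_vec n" unfolding d_def using zj vc by simp
      have Bd: "B *\<^sub>v d = b \<cdot>\<^sub>v d" unfolding d_def by (rule eig_lincomb[OF B zj(1) vc zj(2) Bv])
      have "u \<bullet> d = u \<bullet> ((u \<bullet> v) \<cdot>\<^sub>v z j) - u \<bullet> ((u \<bullet> z j) \<cdot>\<^sub>v v)" unfolding d_def
        by (rule scalar_prod_minus_distrib[OF uc], insert zj vc, auto)
      also have "\<dots> = 0" using uc zj vc by simp
      finally have ud: "u \<bullet> d = 0" .
      have "eigenvector B d b" using evz[OF dc _ Bd] d0 unfolding d_def by simp
      thus ?thesis unfolding perpV_def using eu ud by blast
    next
      case False
      define c where "c = vec n (\<lambda>j. (u \<bullet> z j) / (u \<bullet> v))"
      have cc: "c \<in> carrier_vec n" unfolding c_def by simp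
      have "c $ j0 = 1" unfolding c_def v_def using j0 uv v_def by simp
      hence c0: "c \<noteq> 0\<^sub>v n" using j0 by auto
      have zc: "\<And>j. j < n \<Longrightarrow> z j = c $ j \<cdot>\<^sub>v v"
      proof -
        fix j assume j: "j < n"
        have zj: "z j \<in> carrier_vec n" using z(1) j by auto
        have eq: "(u \<bullet> v) \<cdot>\<^sub>v z j - (u \<bullet> z j) \<cdot>\<^sub>v v = 0\<^sub>v n" using False j by blast
        show "z j = c $ j \<cdot>\<^sub>v v"
        proof (rule eq_vecI)
          fix r assume "r < dim_vec (c $ j \<cdot>\<^sub>v v)"
          hence r: "r < n" using vc by simp
          have "((u \<bullet> v) \<cdot>\<^sub>v z j - (u \<bullet> z j) \<cdot>\<^sub>v v) $ r = 0" using eq r by simp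
          hence "(u \<bullet> v) * z j $ r = (u \<bullet> z j) * v $ r" using r zj vc by simp
          hence "z j $ r = (u \<bullet> z j) / (u \<bullet> v) * v $ r" using uv by (simp add: field_simps)
          thus "z j $ r = (c $ j \<cdot>\<^sub>v v) $ r" unfolding c_def using j r vc by simp
        qed (insert zj vc, simp)
      qed
      have Q: "Qv n A v \<in> carrier_mat n n" unfolding Qv_def by simp
      have "Qv n A v *\<^sub>v c = 0\<^sub>v n"
      proof (rule eq_vecI)
        fix q assume "q < dim_vec (0\<^sub>v n :: 'a vec)"
        hence q: "q < n" by simp
        have "(Qv n A v *\<^sub>v c) $ q = (\<Sum>j<n. (A ^\<^sub>m j *\<^sub>v v) $ q * c $ j)"
          unfolding Qv_def using cc q by (simp add: scalar_prod_def lessThan_atLeast0)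
        also have "\<dots> = (\<Sum>j<n. (A ^\<^sub>m j *\<^sub>v z j) $ q)"
        proof (rule sum.cong[OF refl])
          fix j assume "j \<in> {..<n}"
          hence j: "j < n" by simp
          have "A ^\<^sub>m j *\<^sub>v z j = c $ j \<cdot>\<^sub>v (A ^\<^sub>m j *\<^sub>v v)"
            unfolding zc[OF j] by (rule mult_mat_vec[OF pow_carrier_mat[OF A] vc])
          thus "(A ^\<^sub>m j *\<^sub>v v) $ q * c $ j = (A ^\<^sub>m j *\<^sub>v z j) $ q" using q A vc by simp
        qed
        also have "\<dots> = 0" using z(3) q by simp
        finally show "(Qv n A v *\<^sub>v c) $ q = 0\<^sub>v n $ q" using q by simp
      qed (insert Q, simp)
      hence "det (Qv n A v) = 0" using det_0_iff_vec_prod_zero[OF Q] cc c0 by blast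
      moreover have "eigenvector B v b" using evz[OF vc _ Bv] j0 unfolding v_def by simp
      ultimately have "ltV n A B" using det_to_ltV[OF A B] by blast
      thus ?thesis using ltV_to_perp[OF A B spA] by blast
    qed
  qed
qed

lemma tri_to_perp:
  fixes A B :: "'a :: field mat"
  assumes A: "A \<in> carrier_mat n n" and B: "B \<in> carrier_mat n n" and tri: "prop_tri n A B"
  shows "perpV n A B"
proof -
  from tri obtain P Pinv A' B' X Y a b where n2: "n \<ge> 2" and
    P: "P \<in> carrier_mat n n" and Pi: "Pinv \<in> carrier_mat n n" and PPi: "P * Pinv = 1\<^sub>m n"
    and PiP: "Pinv * P = 1\<^sub>m n" and A': "A' \<in> carrier_mat (n - 1) (n - 1)"
    and B': "B' \<in> carrier_mat (n - 1) (n - 1)" and X: "X \<in> carrier_mat (n - 1) 1"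
    and Y: "Y \<in> carrier_mat 1 (n - 1)"
    and CA: "Pinv * A * P = four_block_mat A' X (0\<^sub>m 1 (n - 1)) (mat 1 1 (\<lambda>_. a))"
    and CB: "Pinv * B * P = four_block_mat (mat 1 1 (\<lambda>_. b)) Y (0\<^sub>m (n - 1) 1) B'"
    unfolding prop_tri_def by blast
  define C where "C = Pinv * A * P"
  define D where "D = Pinv * B * P"
  have Cc: "C \<in> carrier_mat n n" unfolding C_def using P Pi A by simp
  have Dc: "D \<in> carrier_mat n n" unfolding D_def using P Pi B by simp
  have Crow: "\<And>j. j < n \<Longrightarrow> C $$ (n - 1, j) = (if j = n - 1 then a else 0)"
  proof -
    fix j assume j: "j < n"
    show "C $$ (n - 1, j) = (if j = n - 1 then a else 0)"
      unfolding C_def CA using j n2 A' X by (subst index_mat_four_block, auto)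
  qed
  have Dcol: "\<And>i. i < n \<Longrightarrow> D $$ (i, 0) = (if i = 0 then b else 0)"
  proof -
    fix i assume i: "i < n"
    show "D $$ (i, 0) = (if i = 0 then b else 0)"
      unfolding D_def CB using i n2 B' Y by (subst index_mat_four_block, auto)
  qed
  define w where "w = row Pinv (n - 1)"
  define v where "v = col P 0"
  have wc: "w \<in> carrier_vec n" unfolding w_def using row_carrier[of Pinv "n - 1"] Pi by simp
  have vc: "v \<in> carrier_vec n" unfolding v_def using col_dim[of P 0] P by simp
  have PA: "Pinv * A = C * Pinv"
  proof -
    have "C * Pinv = Pinv * A * (P * Pinv)" unfolding C_def
      using assoc_mult_mat[OF mult_carrier_mat[OF Pi A] P Pi] .
    thus ?thesis unfolding PPi using Pi A by simp
  qed
  have BP: "B * P = P * D"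
  proof -
    have "P * D = P * (Pinv * (B * P))" unfolding D_def using assoc_mult_mat[OF Pi B P] by simp
    also have "\<dots> = (P * Pinv) * (B * P)" using assoc_mult_mat[OF P Pi mult_carrier_mat[OF B P]] by simp
    finally show ?thesis unfolding PPi using B P by simp
  qed
  have rowC: "row C (n - 1) = a \<cdot>\<^sub>v unit_vec n (n - 1)"
    by (rule eq_vecI, insert Cc Crow n2, auto)
  have wA: "transpose_mat A *\<^sub>v w = a \<cdot>\<^sub>v w"
  proof (rule eq_vecI)
    fix j assume "j < dim_vec (a \<cdot>\<^sub>v w)"
    hence j: "j < n" using wc by simp
    have "(transpose_mat A *\<^sub>v w) $ j = col A j \<bullet> w" using A j by simp
    also have "\<dots> = w \<bullet> col A j" using comm_scalar_prod[of "col A j" n w] A wc j by simp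
    also have "\<dots> = (Pinv * A) $$ (n - 1, j)" unfolding w_def using Pi A j n2 by simp
    also have "\<dots> = row C (n - 1) \<bullet> col Pinv j" unfolding PA using Cc Pi j n2 by simp
    also have "\<dots> = a * Pinv $$ (n - 1, j)" unfolding rowC using Pi j n2 by simp
    finally show "(transpose_mat A *\<^sub>v w) $ j = (a \<cdot>\<^sub>v w) $ j" unfolding w_def using Pi j n2 by simp
  qed (insert A wc, simp)
  have colD: "col D 0 = b \<cdot>\<^sub>v unit_vec n 0"
    by (rule eq_vecI, insert Dc Dcol n2, auto)
  have Bv: "B *\<^sub>v v = b \<cdot>\<^sub>v v"
  proof -
    have "B *\<^sub>v v = col (B * P) 0" unfolding v_def by (rule col_mult2[symmetric, OF B P], insert n2, simp)
    also have "\<dots> = P *\<^sub>v col D 0" unfolding BP by (rule col_mult2[OF P Dc], insert n2, simp)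
    also have "\<dots> = b \<cdot>\<^sub>v (P *\<^sub>v unit_vec n 0)" unfolding colD by (rule mult_mat_vec[OF P], simp)
    also have "P *\<^sub>v unit_vec n 0 = v" unfolding v_def using mult_unit_vec_col[OF P] n2 by simp
    finally show ?thesis .
  qed
  have PiPe: "\<And>i j. i < n \<Longrightarrow> j < n \<Longrightarrow> row Pinv i \<bullet> col P j = (if i = j then 1 else 0)"
  proof -
    fix i j assume "i < n" "j < n"
    hence "(Pinv * P) $$ (i, j) = row Pinv i \<bullet> col P j" using Pi P by simp
    thus "row Pinv i \<bullet> col P j = (if i = j then 1 else 0)" unfolding PiP using \<open>i < n\<close> \<open>j < n\<close> by simp
  qed
  have wv: "w \<bullet> v = 0" unfolding w_def v_def using PiPe[of "n - 1" 0] n2 by simp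
  have w0: "w \<noteq> 0\<^sub>v n"
  proof
    assume "w = 0\<^sub>v n"
    hence "w \<bullet> col P (n - 1) = 0" using col_dim[of P "n - 1"] P by simp
    thus False unfolding w_def using PiPe[of "n - 1" "n - 1"] n2 by simp
  qed
  have v0: "v \<noteq> 0\<^sub>v n"
  proof
    assume "v = 0\<^sub>v n"
    hence "row Pinv 0 \<bullet> v = 0" using row_carrier[of Pinv 0] Pi by simp
    thus False unfolding v_def using PiPe[of 0 0] n2 by simp
  qed
  have "eigenvector (transpose_mat A) w a" unfolding eigenvector_def using wc w0 wA A by simp
  moreover have "eigenvector B v b" unfolding eigenvector_def using vc v0 Bv B by simp
  ultimately show ?thesis unfolding perpV_def using wv by blast
qed

lemma det_S:
  fixes c :: "'a :: field vec"
  assumes n: "n \<ge> 1"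
  shows "det (mat n n (\<lambda>(i,j). if i = n - 1 then c $ j else (if i = j then 1 else 0))) = c $ (n - 1)"
proof -
  define S where "S = mat n n (\<lambda>(i,j). if i = n - 1 then c $ j else (if i = j then (1 :: 'a) else 0))"
  have Sc: "S \<in> carrier_mat n n" unfolding S_def by simp
  have STc: "transpose_mat S \<in> carrier_mat n n" using Sc by simp
  have ut: "upper_triangular (transpose_mat S)"
  proof (rule upper_triangularI)
    fix i j assume ji: "j < i" and i: "i < dim_row (transpose_mat S)"
    hence i': "i < n" using Sc by simp
    hence j: "j < n" using ji by simp
    have "transpose_mat S $$ (i, j) = S $$ (j, i)" using i' j Sc by simp
    also have "\<dots> = 0" unfolding S_def using i' j ji by simp
    finally show "transpose_mat S $$ (i, j) = 0" .
  qed
  have "det S = det (transpose_mat S)" using det_transpose[OF Sc] by simp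
  also have "\<dots> = prod_list (diag_mat (transpose_mat S))" by (rule det_upper_triangular[OF ut STc])
  also have "diag_mat (transpose_mat S) = map (\<lambda>i. if i = n - 1 then c $ (n - 1) else 1) [0..<n]"
    unfolding diag_mat_def S_def by (rule map_cong, auto)
  also have "[0..<n] = [0..<n - 1] @ [n - 1]" using n by (cases n, auto)
  also have "map (\<lambda>i. if i = n - 1 then c $ (n - 1) else 1) ([0..<n - 1] @ [n - 1])
     = map (\<lambda>i. 1) [0..<n - 1] @ [c $ (n - 1)]" by simp
  also have "prod_list \<dots> = c $ (n - 1)"
  proof -
    have "prod_list (map (\<lambda>i. (1 :: 'a)) xs) = 1" for xs :: "nat list" by (induct xs, auto)
    thus ?thesis by simp
  qed
  finally show ?thesis unfolding S_def .
qed

lemma perp_to_tri: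
  fixes A B :: "'a :: field mat"
  assumes A: "A \<in> carrier_mat n n" and B: "B \<in> carrier_mat n n" and n2: "n \<ge> 2"
    and p: "perpV n A B"
  shows "prop_tri n A B"
proof -
  obtain w k v l where ew: "eigenvector (transpose_mat A) w k" and ev: "eigenvector B v l"
    and wv: "w \<bullet> v = 0" using p unfolding perpV_def by blast
  have wc: "w \<in> carrier_vec n" and w0: "w \<noteq> 0\<^sub>v n" and wA: "transpose_mat A *\<^sub>v w = k \<cdot>\<^sub>v w"
    using ew A unfolding eigenvector_def by auto
  have vc: "v \<in> carrier_vec n" and v0: "v \<noteq> 0\<^sub>v n" and Bv: "B *\<^sub>v v = l \<cdot>\<^sub>v v"
    using ev B unfolding eigenvector_def by auto
  have vw: "v \<bullet> w = 0" using wv comm_scalar_prod[OF wc vc] by simp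
  obtain Q Qi where Q: "Q \<in> carrier_mat n n" and Qi: "Qi \<in> carrier_mat n n" and QQi: "Q * Qi = 1\<^sub>m n"
    and QiQ: "Qi * Q = 1\<^sub>m n" and Q0: "col Q 0 = v" using complete_inv[OF vc v0] by blast
  define w1 where "w1 = transpose_mat Q *\<^sub>v w"
  have w1j: "\<And>j. j < n \<Longrightarrow> w1 $ j = col Q j \<bullet> w" unfolding w1_def using Q by simp
  have w1c: "w1 \<in> carrier_vec n" unfolding w1_def using Q wc by simp
  have "w1 \<noteq> 0\<^sub>v n"
  proof
    assume w10: "w1 = 0\<^sub>v n"
    have "transpose_mat Qi *\<^sub>v w1 = (transpose_mat Qi * transpose_mat Q) *\<^sub>v w"
      unfolding w1_def using assoc_mult_mat_vec[of "transpose_mat Qi" n n "transpose_mat Q" n w] Q Qi wc by simp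
    also have "transpose_mat Qi * transpose_mat Q = transpose_mat (Q * Qi)"
      using transpose_mult[OF Q Qi] by simp
    also have "\<dots> = 1\<^sub>m n" unfolding QQi by simp
    finally have "transpose_mat Qi *\<^sub>v w1 = w" using wc by simp
    moreover have "transpose_mat Qi *\<^sub>v w1 = 0\<^sub>v n" unfolding w10 using Qi by (intro eq_vecI, auto)
    ultimately show False using w0 by simp
  qed
  then obtain kk where kk: "kk < n" "w1 $ kk \<noteq> 0" using w1c by (metis eq_vecI carrier_vecD index_zero_vec)
  have kk0: "kk \<noteq> 0"
  proof
    assume "kk = 0"
    hence "w1 $ kk = v \<bullet> w" using w1j n2 Q0 by simp
    thus False using vw kk by simp
  qed
  have n1: "n - 1 < n" using n2 by simp
  define S0 where "S0 = (swaprows_mat n kk (n - 1) :: 'a mat)"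
  have S0: "S0 \<in> carrier_mat n n" unfolding S0_def by simp
  have S0S0: "S0 * S0 = 1\<^sub>m n" unfolding S0_def by (rule swaprows_mat_inv[OF kk(1) n1])
  have colS00: "col S0 0 = unit_vec n 0"
    by (rule eq_vecI, insert kk0 n2 kk(1), auto simp: S0_def)
  have colS0n: "col S0 (n - 1) = unit_vec n kk"
    by (rule eq_vecI, insert kk0 n2 kk(1), auto simp: S0_def)
  define Q2 where "Q2 = Q * S0"
  define Q2i where "Q2i = S0 * Qi"
  have Q2: "Q2 \<in> carrier_mat n n" unfolding Q2_def using Q S0 by simp
  have Q2i: "Q2i \<in> carrier_mat n n" unfolding Q2i_def using Qi S0 by simp
  have Q2Q2i: "Q2 * Q2i = 1\<^sub>m n"
  proof -
    have "Q2 * Q2i = Q * (S0 * (S0 * Qi))" unfolding Q2_def Q2i_def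
      using assoc_mult_mat[OF Q S0 mult_carrier_mat[OF S0 Qi]] by simp
    also have "S0 * (S0 * Qi) = (S0 * S0) * Qi" using assoc_mult_mat[OF S0 S0 Qi] by simp
    also have "\<dots> = Qi" unfolding S0S0 using Qi by simp
    finally show ?thesis using QQi by simp
  qed
  have Q2iQ2: "Q2i * Q2 = 1\<^sub>m n"
  proof -
    have "Q2i * Q2 = S0 * (Qi * (Q * S0))" unfolding Q2_def Q2i_def
      using assoc_mult_mat[OF S0 Qi mult_carrier_mat[OF Q S0]] by simp
    also have "Qi * (Q * S0) = (Qi * Q) * S0" using assoc_mult_mat[OF Qi Q S0] by simp
    also have "\<dots> = S0" unfolding QiQ using S0 by simp
    finally show ?thesis using S0S0 by simp
  qed
  have colQ20: "col Q2 0 = v"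
  proof -
    have "col Q2 0 = Q *\<^sub>v col S0 0" unfolding Q2_def by (rule col_mult2[OF Q S0], insert n2, simp)
    also have "\<dots> = col Q 0" unfolding colS00 using mult_unit_vec_col[OF Q, of 0] n2 by simp
    finally show ?thesis using Q0 by simp
  qed
  have colQ2n: "col Q2 (n - 1) = col Q kk"
  proof -
    have "col Q2 (n - 1) = Q *\<^sub>v col S0 (n - 1)" unfolding Q2_def by (rule col_mult2[OF Q S0 n1])
    also have "\<dots> = col Q kk" unfolding colS0n using mult_unit_vec_col[OF Q kk(1)] by simp
    finally show ?thesis .
  qed
  define w2 where "w2 = transpose_mat Q2 *\<^sub>v w"
  have w2j: "\<And>j. j < n \<Longrightarrow> w2 $ j = col Q2 j \<bullet> w" unfolding w2_def using Q2 by simp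
  have w2c: "w2 \<in> carrier_vec n" unfolding w2_def using Q2 wc by simp
  have w20: "w2 $ 0 = 0" using w2j[of 0] n2 colQ20 vw by simp
  have w2n: "w2 $ (n - 1) \<noteq> 0" using w2j[OF n1] colQ2n w1j[OF kk(1)] kk(2) by simp
  define S where "S = mat n n (\<lambda>(i,j). if i = n - 1 then w2 $ j else (if i = j then (1 :: 'a) else 0))"
  have S: "S \<in> carrier_mat n n" unfolding S_def by simp
  have "det S = w2 $ (n - 1)" unfolding S_def by (rule det_S, insert n2, simp)
  then obtain Si where Si: "Si \<in> carrier_mat n n" "S * Si = 1\<^sub>m n" "Si * S = 1\<^sub>m n"
    using det_inv[OF S] w2n by auto
  have colS0: "col S 0 = unit_vec n 0"
    by (rule eq_vecI, insert n2 w20, auto simp: S_def)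
  have rowS: "row S (n - 1) = w2" by (rule eq_vecI, insert n1 w2c, auto simp: S_def)
  have Sie: "Si *\<^sub>v unit_vec n 0 = unit_vec n 0"
  proof -
    have "S *\<^sub>v unit_vec n 0 = unit_vec n 0" using mult_unit_vec_col[OF S, of 0] colS0 n2 by simp
    hence "Si *\<^sub>v unit_vec n 0 = Si *\<^sub>v (S *\<^sub>v unit_vec n 0)" by simp
    also have "\<dots> = (Si * S) *\<^sub>v unit_vec n 0" by (rule assoc_mult_mat_vec[symmetric, OF Si(1) S], simp)
    finally show ?thesis unfolding Si(3) by simp
  qed
  define P where "P = Q2 * Si"
  define Pinv where "Pinv = S * Q2i"
  have P: "P \<in> carrier_mat n n" unfolding P_def using Q2 Si by simp
  have Pi: "Pinv \<in> carrier_mat n n" unfolding Pinv_def using Q2i S by simp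
  have PPi: "P * Pinv = 1\<^sub>m n"
  proof -
    have "P * Pinv = Q2 * (Si * (S * Q2i))" unfolding P_def Pinv_def
      using assoc_mult_mat[OF Q2 Si(1) mult_carrier_mat[OF S Q2i]] by simp
    also have "Si * (S * Q2i) = (Si * S) * Q2i" using assoc_mult_mat[OF Si(1) S Q2i] by simp
    also have "\<dots> = Q2i" unfolding Si(3) using Q2i by simp
    finally show ?thesis using Q2Q2i by simp
  qed
  have PiP: "Pinv * P = 1\<^sub>m n"
  proof -
    have "Pinv * P = S * (Q2i * (Q2 * Si))" unfolding P_def Pinv_def
      using assoc_mult_mat[OF S Q2i mult_carrier_mat[OF Q2 Si(1)]] by simp
    also have "Q2i * (Q2 * Si) = (Q2i * Q2) * Si" using assoc_mult_mat[OF Q2i Q2 Si(1)] by simp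
    also have "\<dots> = Si" unfolding Q2iQ2 using Si by simp
    finally show ?thesis using Si by simp
  qed
  have colP0: "col P 0 = v"
  proof -
    have "col P 0 = Q2 *\<^sub>v col Si 0" unfolding P_def by (rule col_mult2[OF Q2 Si(1)], insert n2, simp)
    also have "col Si 0 = unit_vec n 0" using mult_unit_vec_col[OF Si(1), of 0] Sie n2 by simp
    also have "Q2 *\<^sub>v unit_vec n 0 = col Q2 0" using mult_unit_vec_col[OF Q2, of 0] n2 by simp
    finally show ?thesis using colQ20 by simp
  qed
  have rowPi: "row Pinv (n - 1) = w"
  proof (rule eq_vecI)
    fix j assume "j < dim_vec w"
    hence j: "j < n" using wc by simp
    have "row Pinv (n - 1) $ j = row S (n - 1) \<bullet> col Q2i j" unfolding Pinv_def using S Q2i j n1 by simp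
    also have "\<dots> = (transpose_mat Q2 *\<^sub>v w) \<bullet> col Q2i j" unfolding rowS w2_def ..
    also have "\<dots> = w \<bullet> (Q2 *\<^sub>v col Q2i j)" by (rule transpose_vec_mult_scalar[OF Q2 _ wc], insert Q2i j, simp)
    also have "Q2 *\<^sub>v col Q2i j = col (Q2 * Q2i) j" by (rule col_mult2[symmetric, OF Q2 Q2i j])
    also have "\<dots> = unit_vec n j" unfolding Q2Q2i using j by simp
    also have "w \<bullet> unit_vec n j = w $ j" using scalar_prod_right_unit[OF j] .
    finally show "row Pinv (n - 1) $ j = w $ j" .
  qed (insert Pi wc, simp)
  define C where "C = Pinv * A * P"
  define D where "D = Pinv * B * P"
  have Cc: "C \<in> carrier_mat n n" unfolding C_def using P Pi A by simp
  have Dc: "D \<in> carrier_mat n n" unfolding D_def using P Pi B by simp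
  have PiPe: "\<And>i j. i < n \<Longrightarrow> j < n \<Longrightarrow> row Pinv i \<bullet> col P j = (if i = j then 1 else 0)"
  proof -
    fix i j assume "i < n" "j < n"
    hence "(Pinv * P) $$ (i, j) = row Pinv i \<bullet> col P j" using Pi P by simp
    thus "row Pinv i \<bullet> col P j = (if i = j then 1 else 0)" unfolding PiP using \<open>i < n\<close> \<open>j < n\<close> by simp
  qed
  have rowPA: "row (Pinv * A) (n - 1) = k \<cdot>\<^sub>v w"
  proof (rule eq_vecI)
    fix m assume "m < dim_vec (k \<cdot>\<^sub>v w)"
    hence m: "m < n" using wc by simp
    have "row (Pinv * A) (n - 1) $ m = w \<bullet> col A m" using rowPi Pi A m n1 by simp
    also have "\<dots> = col A m \<bullet> w" using comm_scalar_prod[of w n "col A m"] wc A m by simp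
    also have "\<dots> = (transpose_mat A *\<^sub>v w) $ m" using A m by simp
    finally show "row (Pinv * A) (n - 1) $ m = (k \<cdot>\<^sub>v w) $ m" unfolding wA using m wc by simp
  qed (insert Pi A wc, simp)
  have Crow: "\<And>j. j < n \<Longrightarrow> C $$ (n - 1, j) = (if j = n - 1 then k else 0)"
  proof -
    fix j assume j: "j < n"
    have "C $$ (n - 1, j) = row (Pinv * A) (n - 1) \<bullet> col P j" unfolding C_def
      by (rule index_mult_mat(1), insert Pi A P j n1, auto)
    also have "\<dots> = k * (w \<bullet> col P j)" unfolding rowPA using wc P j by simp
    also have "w \<bullet> col P j = (if n - 1 = j then 1 else 0)" using PiPe[OF n1 j] rowPi by simp
    finally show "C $$ (n - 1, j) = (if j = n - 1 then k else 0)" by auto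
  qed
  have colD: "col D 0 = l \<cdot>\<^sub>v unit_vec n 0"
  proof -
    have PB: "Pinv * B \<in> carrier_mat n n" using Pi B by simp
    have "col D 0 = (Pinv * B) *\<^sub>v col P 0" unfolding D_def by (rule col_mult2[OF PB P], insert n2, simp)
    also have "\<dots> = Pinv *\<^sub>v (B *\<^sub>v v)" unfolding colP0 by (rule assoc_mult_mat_vec[OF Pi B vc])
    also have "\<dots> = l \<cdot>\<^sub>v (Pinv *\<^sub>v v)" unfolding Bv by (rule mult_mat_vec[OF Pi vc])
    also have "Pinv *\<^sub>v v = col (Pinv * P) 0" unfolding colP0[symmetric] by (rule col_mult2[symmetric, OF Pi P], insert n2, simp)
    also have "\<dots> = unit_vec n 0" unfolding PiP using n2 by simp
    finally show ?thesis .
  qed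
  have Dcol: "\<And>i. i < n \<Longrightarrow> D $$ (i, 0) = (if i = 0 then l else 0)"
  proof -
    fix i assume i: "i < n"
    have "D $$ (i, 0) = col D 0 $ i" using Dc i n2 by simp
    thus "D $$ (i, 0) = (if i = 0 then l else 0)" unfolding colD using i by simp
  qed
  define A' where "A' = mat (n - 1) (n - 1) (\<lambda>(i,j). C $$ (i, j))"
  define X where "X = mat (n - 1) 1 (\<lambda>(i,j). C $$ (i, n - 1))"
  define Y where "Y = mat 1 (n - 1) (\<lambda>(i,j). D $$ (0, Suc j))"
  define B' where "B' = mat (n - 1) (n - 1) (\<lambda>(i,j). D $$ (Suc i, Suc j))"
  have nn: "n - 1 + 1 = n" "1 + (n - 1) = n" using n2 by auto
  have CA: "C = four_block_mat A' X (0\<^sub>m 1 (n - 1)) (mat 1 1 (\<lambda>_. k))"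
  proof (rule eq_matI)
    fix i j assume i: "i < dim_row (four_block_mat A' X (0\<^sub>m 1 (n - 1)) (mat 1 1 (\<lambda>_. k)))"
      and j: "j < dim_col (four_block_mat A' X (0\<^sub>m 1 (n - 1)) (mat 1 1 (\<lambda>_. k)))"
    hence i': "i < n" and j': "j < n" unfolding A'_def using nn by auto
    show "C $$ (i, j) = four_block_mat A' X (0\<^sub>m 1 (n - 1)) (mat 1 1 (\<lambda>_. k)) $$ (i, j)"
    proof (cases "j < n - 1")
      case jT: True
      show ?thesis
      proof (cases "i < n - 1")
        case True
        thus ?thesis using i' j' jT Crow unfolding A'_def X_def by (subst index_mat_four_block, auto)
      next
        case False
        hence "i = n - 1" using i' by simp
        thus ?thesis using i' j' jT Crow unfolding A'_def X_def by (subst index_mat_four_block, auto)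
      qed
    next
      case jF: False
      hence jn: "j = n - 1" using j' by simp
      show ?thesis
      proof (cases "i < n - 1")
        case True
        thus ?thesis using i' j' jn Crow unfolding A'_def X_def by (subst index_mat_four_block, auto)
      next
        case False
        hence "i = n - 1" using i' by simp
        thus ?thesis using i' j' jn Crow unfolding A'_def X_def by (subst index_mat_four_block, auto)
      qed
    qed
  qed (insert Cc nn, auto simp: A'_def)
  have DB: "D = four_block_mat (mat 1 1 (\<lambda>_. l)) Y (0\<^sub>m (n - 1) 1) B'"
  proof (rule eq_matI)
    fix i j assume i: "i < dim_row (four_block_mat (mat 1 1 (\<lambda>_. l)) Y (0\<^sub>m (n - 1) 1) B')"
      and j: "j < dim_col (four_block_mat (mat 1 1 (\<lambda>_. l)) Y (0\<^sub>m (n - 1) 1) B')"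
    hence i': "i < n" and j': "j < n" unfolding B'_def using nn by auto
    show "D $$ (i, j) = four_block_mat (mat 1 1 (\<lambda>_. l)) Y (0\<^sub>m (n - 1) 1) B' $$ (i, j)"
    proof (cases "j = 0")
      case True
      thus ?thesis using i' j' Dcol unfolding Y_def B'_def by (subst index_mat_four_block, auto)
    next
      case False
      then obtain j1 where j1: "j = Suc j1" by (cases j, auto)
      show ?thesis
      proof (cases "i = 0")
        case True
        thus ?thesis using i' j' j1 unfolding Y_def B'_def by (subst index_mat_four_block, auto)
      next
        case False
        then obtain i1 where i1: "i = Suc i1" by (cases i, auto)
        thus ?thesis using i' j' j1 unfolding Y_def B'_def by (subst index_mat_four_block, auto)
      qed
    qed
  qed (insert Dc nn, auto simp: B'_def)
  have "A' \<in> carrier_mat (n - 1) (n - 1)" "B' \<in> carrier_mat (n - 1) (n - 1)"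
    "X \<in> carrier_mat (n - 1) 1" "Y \<in> carrier_mat 1 (n - 1)"
    unfolding A'_def B'_def X_def Y_def by auto
  thus ?thesis unfolding prop_tri_def using n2 P Pi PPi PiP CA DB unfolding C_def D_def by blast
qed

lemma perp_n2:
  fixes A B :: "'a :: field mat"
  assumes A: "A \<in> carrier_mat n n" and B: "B \<in> carrier_mat n n" and n: "n \<ge> 1" and p: "perpV n A B"
  shows "n \<ge> 2"
proof (rule ccontr)
  assume "\<not> n \<ge> 2"
  hence n1: "n = 1" using n by simp
  obtain w k v l where ew: "eigenvector (transpose_mat A) w k" and ev: "eigenvector B v l"
    and wv: "w \<bullet> v = 0" using p unfolding perpV_def by blast
  have wc: "w \<in> carrier_vec n" and w0: "w \<noteq> 0\<^sub>v n" using ew A unfolding eigenvector_def by auto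
  have vc: "v \<in> carrier_vec n" and v0: "v \<noteq> 0\<^sub>v n" using ev B unfolding eigenvector_def by auto
  have "w $ 0 \<noteq> 0"
  proof
    assume "w $ 0 = 0"
    hence "w = 0\<^sub>v n" using wc n1 by (intro eq_vecI, auto)
    thus False using w0 by simp
  qed
  moreover have "v $ 0 \<noteq> 0"
  proof
    assume "v $ 0 = 0"
    hence "v = 0\<^sub>v n" using vc n1 by (intro eq_vecI, auto)
    thus False using v0 by simp
  qed
  moreover have "w \<bullet> v = w $ 0 * v $ 0" using vc n1 by (simp add: scalar_prod_def)
  ultimately show False using wv by simp
qed

theorem theorem1:
  fixes A B :: "'a :: field mat" and n :: nat
  assumes "n \<ge> 1" and "A \<in> carrier_mat n n" and "B \<in> carrier_mat n n"
  shows "(prop_perp n A B \<longleftrightarrow> prop_sub n A B)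
       \<and> (prop_sub n A B \<longleftrightarrow> prop_tri n A B)
       \<and> (prop_tri n A B \<longrightarrow> prop_lt n A B)
       \<and> (prop_lt n A B \<longrightarrow> prop_top n A B)
       \<and> (char_poly_splits A \<longrightarrow>
            (prop_perp n A B \<longleftrightarrow> prop_sub n A B) \<and> (prop_sub n A B \<longleftrightarrow> prop_tri n A B)
            \<and> (prop_tri n A B \<longleftrightarrow> prop_lt n A B))
       \<and> (char_poly_splits A \<and> char_poly_splits B \<longrightarrow>
            (prop_perp n A B \<longleftrightarrow> prop_sub n A B) \<and> (prop_sub n A B \<longleftrightarrow> prop_tri n A B)
            \<and> (prop_tri n A B \<longleftrightarrow> prop_lt n A B) \<and> (prop_lt n A B \<longleftrightarrow> prop_top n A B))"
proof -
  note n = assms(1) and A = assms(2) and B = assms(3)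
  have perp: "prop_perp n A B \<longleftrightarrow> perpV n A B" by (rule perp_iff[OF A B])
  have sub: "prop_sub n A B \<longleftrightarrow> perpV n A B"
    using sub_to_perp[OF A B n] perp_to_sub[OF A B] by blast
  have tri: "prop_tri n A B \<longleftrightarrow> perpV n A B"
    using tri_to_perp[OF A B] perp_to_tri[OF A B] perp_n2[OF A B n] by blast
  have tri_lt: "prop_tri n A B \<longrightarrow> prop_lt n A B"
    using tri perp_to_ltV[OF A B] ltV_to_lt[OF A B] by blast
  have lt_top: "prop_lt n A B \<longrightarrow> prop_top n A B"
  proof
    assume "prop_lt n A B"
    hence "ltV n A B" by (rule lt_to_ltV[OF A B])
    then obtain v l where "eigenvector B v l" "det (Qv n A v) = 0" using ltV_to_det[OF A B] by blast
    thus "prop_top n A B" using det_to_top[OF A B] by blast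
  qed
  have splitA: "char_poly_splits A \<longrightarrow> (prop_lt n A B \<longrightarrow> prop_tri n A B)"
    using lt_to_ltV[OF A B] ltV_to_perp[OF A B] tri by blast
  have splitAB: "char_poly_splits A \<and> char_poly_splits B \<longrightarrow> (prop_top n A B \<longrightarrow> prop_lt n A B)"
    using top_to_perp[OF A B n] perp_to_ltV[OF A B] ltV_to_lt[OF A B] by blast
  show ?thesis using perp sub tri tri_lt lt_top splitA splitAB by blast
qed

end
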